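(* Fix $0<\eta<\omega_1$, let $\mathcal{F}_1,\mathcal{F}_2,\dots$ be regular families each containing all singletons with $CB(\mathcal{F}_n)<\omega^\eta$ for all $n$, and let $(\varpi_n)_{n=1}^\infty\subset(0,1]$ converge to $0$. For $x\in c_{00}$ and $n\in\mathbb{N}$ let $$|x|_n=\sup\Bigl\{\sum_{i=1}^t\|I_ix\|_{\ell_2}: t\in\mathbb{N},\ I_1<\dots<I_t,\ (\min I_i)_{i=1}^t\in\mathcal{F}_n\Bigr\},$$ where the $I_i$ are nonempty finite subsets of $\mathbb{N}$, and let $[x]=\sup_n\varpi_n|x|_n$. Let $Z$ be the completion of $c_{00}$ with respect to $[\cdot]$. Then the canonical basis of $Z$ is $\eta$-weakly null.
   Context: $E<F$ for $E,F\subset\mathbb{N}$ means $E=\varnothing$, $F=\varnothing$, or $\max E<\min F$. For $E\subset\mathbb{N}$ and $x=\sum a_ne_n\in c_{00}$, $Ex=\sum_{n\in E}a_ne_n$. $2^{\mathbb{N}}$ (the power set of $\mathbb{N}$) carries the topology of $\{0,1\}^{\mathbb{N}}$ via indicator functions. A family $\mathcal{F}\subset[\mathbb{N}]^{<\mathbb{N}}$ (finite subsets) is spreading if whenever $(m_i)_{i=1}^k\in\mathcal{F}$ (increasing enumeration) and $m_i\leqslant n_i$ with $n_1<\dots<n_k$, then $(n_i)_{i=1}^k\in\mathcal{F}$; hereditary if closed under subsets; regular if spreading, hereditary and compact. For regular $\mathcal{F}$, $\mathcal{F}'$ is $\mathcal{F}$ minus its maximal (under inclusion) members; $\mathcal{F}^0=\mathcal{F}$,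 $\mathcal{F}^{\xi+1}=(\mathcal{F}^\xi)'$, $\mathcal{F}^\xi=\bigcap_{\zeta<\xi}\mathcal{F}^\zeta$ for limit $\xi$; $CB(\mathcal{F})$ is the least $\xi$ with $\mathcal{F}^\xi=\varnothing$. Schreier families: $\mathcal{S}_0=\{\varnothing\}\cup\{\{n\}\}$; $\mathcal{S}=\{\varnothing\}\cup\{E:|E|\leqslant\min E\}$; $\mathcal{G}[\mathcal{F}]=\{\varnothing\}\cup\{\bigcup_{i=1}^nE_i:\varnothing\neq E_i\in\mathcal{F},E_1<\dots<E_n,(\min E_i)_{i=1}^n\in\mathcal{G}\}$; $\mathcal{S}_{\xi+1}=\mathcal{S}[\mathcal{S}_\xi]$; for limit $\xi<\omega_1$, with a fixed $\xi_n\uparrow\xi$ satisfying $\mathcal{S}_{\xi_n+1}\subset\mathcal{S}_{\xi_{n+1}}$, $\mathcal{S}_\xi=\{\varnothing\}\cup\{E\neq\varnothing:E\in\mathcal{S}_{\xi_{\min E}+1}\}$. For $\xi<\omega_1$, a bounded sequence $(x_n)$ in a Banach space is an $\ell_1^\xi+$-spreading model if $\inf\{\|x\|:F\in\mathcal{S}_\xi,x\in\mathrm{co}(x_n:n\in F)\}>0$, and $(x_n)$ is $\xi$-weakly null if no subsequence is an $\ell_1^\xi+$-spreading model. *)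

theory Defs
  imports "HOL-Analysis.Analysis"
begin

text \<open>Countable ordinals are represented by well-orders on subsets of nat
  (type nat rel), compared with the library relations <o and =o.\<close>

definition is_succ_of :: "nat rel \<Rightarrow> nat rel \<Rightarrow> bool" where
  "is_succ_of z r \<longleftrightarrow> Well_order z \<and> Well_order r \<and> (z, r) \<in> ordLess \<and>
     (\<forall>w :: nat rel. \<not> ((z, w) \<in> ordLess \<and> (w, r) \<in> ordLess))"

definition is_zero_ord :: "nat rel \<Rightarrow> bool" where
  "is_zero_ord r \<longleftrightarrow> Well_order r \<and> Field r = {}"

definition is_limit_ord :: "nat rel \<Rightarrow> bool" where
  "is_limit_ord r \<longleftrightarrow> Well_order r \<and> Field r \<noteq> {} \<and> \<not> (\<exists>z. is_succ_of z r)"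

text \<open>Ordinal exponentiation omega^eta: finitely supported functions from Field eta
  to nat, ordered by comparing the values at the eta-largest point of difference
  (Cantor normal form representation).\<close>

definition omega_pow :: "nat rel \<Rightarrow> (nat \<Rightarrow> nat) rel" where
  "omega_pow \<eta> = {(f, g).
     finite {a. f a \<noteq> 0} \<and> (\<forall>a. a \<notin> Field \<eta> \<longrightarrow> f a = 0) \<and>
     finite {a. g a \<noteq> 0} \<and> (\<forall>a. a \<notin> Field \<eta> \<longrightarrow> g a = 0) \<and>
     (f = g \<or> (\<exists>a\<in>Field \<eta>. f a < g a \<and>
                 (\<forall>b\<in>Field \<eta>. (a, b) \<in> \<eta> \<and> a \<noteq> b \<longrightarrow> f b = g b)))}"

text \<open>N = {1,2,...}; families are sets of finite subsets of {1..}.\<close>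

definition finite_family :: "nat set set \<Rightarrow> bool" where
  "finite_family F \<longleftrightarrow> (\<forall>E\<in>F. finite E \<and> E \<subseteq> {1..})"

definition spreading :: "nat set set \<Rightarrow> bool" where
  "spreading F \<longleftrightarrow> (\<forall>E\<in>F. \<forall>g :: nat \<Rightarrow> nat.
      strict_mono_on E g \<and> (\<forall>m\<in>E. m \<le> g m) \<longrightarrow> g ` E \<in> F)"

definition hereditary :: "nat set set \<Rightarrow> bool" where
  "hereditary F \<longleftrightarrow> (\<forall>E\<in>F. \<forall>G. G \<subseteq> E \<longrightarrow> G \<in> F)"

text \<open>Compactness in 2^N, identified with {0,1}^N via indicator functions.\<close>
definition compact_family :: "nat set set \<Rightarrow> bool" where
  "compact_family F \<longleftrightarrow>
     compactin (product_topology (\<lambda>_. discrete_topology (UNIV :: bool set)) UNIV)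
               ((\<lambda>E n. n \<in> E) ` F)"

definition regular :: "nat set set \<Rightarrow> bool" where
  "regular F \<longleftrightarrow> finite_family F \<and> spreading F \<and> hereditary F \<and> compact_family F"

definition contains_singletons :: "nat set set \<Rightarrow> bool" where
  "contains_singletons F \<longleftrightarrow> (\<forall>n\<ge>1. {n} \<in> F)"

definition fderiv :: "nat set set \<Rightarrow> nat set set" where
  "fderiv F = F - {E\<in>F. \<forall>G\<in>F. E \<subseteq> G \<longrightarrow> G = E}"

definition derivs :: "nat set set \<Rightarrow> (nat rel \<Rightarrow> nat set set) \<Rightarrow> bool" where
  "derivs F D \<longleftrightarrow>
     (\<forall>r s. Well_order r \<and> Well_order s \<and> (r, s) \<in> ordIso \<longrightarrow> D r = D s) \<and>
     (\<forall>r. is_zero_ord r \<longrightarrow> D r = F) \<and>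
     (\<forall>z r. is_succ_of z r \<longrightarrow> D r = fderiv (D z)) \<and>
     (\<forall>r. is_limit_ord r \<longrightarrow> D r = \<Inter> {D z | z. (z, r) \<in> ordLess})"

definition CB_less :: "nat set set \<Rightarrow> 'a rel \<Rightarrow> bool" where
  "CB_less F \<alpha> \<longleftrightarrow> (\<forall>D. derivs F D \<longrightarrow> (\<exists>\<xi> :: nat rel. (\<xi>, \<alpha>) \<in> ordLess \<and> D \<xi> = {}))"

definition schreier0 :: "nat set set" where
  "schreier0 = {{}} \<union> {{n} | n. 1 \<le> n}"

definition schreier1 :: "nat set set" where
  "schreier1 = {{}} \<union> {E. finite E \<and> E \<subseteq> {1..} \<and> E \<noteq> {} \<and> card E \<le> Min E}"

definition fam_prod :: "nat set set \<Rightarrow> nat set set \<Rightarrow> nat set set" where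
  "fam_prod G F = {{}} \<union> {\<Union> (E ` {..<k}) | (k :: nat) E.
      (\<forall>i<k. E i \<noteq> {} \<and> E i \<in> F) \<and>
      (\<forall>i j. i < j \<and> j < k \<longrightarrow> Max (E i) < Min (E j)) \<and>
      (\<lambda>i. Min (E i)) ` {..<k} \<in> G}"

text \<open>S is an admissible system of Schreier families (S r = S_xi for r of order type xi).\<close>
definition schreier_system :: "(nat rel \<Rightarrow> nat set set) \<Rightarrow> bool" where
  "schreier_system S \<longleftrightarrow>
     (\<forall>r s. Well_order r \<and> Well_order s \<and> (r, s) \<in> ordIso \<longrightarrow> S r = S s) \<and>
     (\<forall>r. is_zero_ord r \<longrightarrow> S r = schreier0) \<and>
     (\<forall>z r. is_succ_of z r \<longrightarrow> S r = fam_prod schreier1 (S z)) \<and>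
     (\<forall>r. is_limit_ord r \<longrightarrow>
        (\<exists>\<xi>s \<sigma>s :: nat \<Rightarrow> nat rel.
           (\<forall>n\<ge>1. (\<xi>s n, r) \<in> ordLess \<and> is_succ_of (\<xi>s n) (\<sigma>s n)) \<and>
           (\<forall>n\<ge>1. (\<xi>s n, \<xi>s (Suc n)) \<in> ordLess) \<and>
           (\<forall>\<zeta> :: nat rel. (\<zeta>, r) \<in> ordLess \<longrightarrow> (\<exists>n\<ge>1. (\<zeta>, \<xi>s n) \<in> ordLess)) \<and>
           (\<forall>n\<ge>1. S (\<sigma>s n) \<subseteq> S (\<xi>s (Suc n))) \<and>
           S r = {{}} \<union> {E. E \<noteq> {} \<and> E \<in> S (\<sigma>s (Min E))}))"

text \<open>Vectors of c00 are functions nat => real (coordinates indexed by 1,2,...).\<close>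

definition ell2_part :: "nat set \<Rightarrow> (nat \<Rightarrow> real) \<Rightarrow> real" where
  "ell2_part I x = sqrt (\<Sum>j\<in>I. (x j)\<^sup>2)"

definition block_norm :: "nat set set \<Rightarrow> (nat \<Rightarrow> real) \<Rightarrow> real" where
  "block_norm F x = Sup {(\<Sum>i<t. ell2_part (I i) x) | (t :: nat) I.
      1 \<le> t \<and> (\<forall>i<t. I i \<noteq> {} \<and> finite (I i) \<and> I i \<subseteq> {1..}) \<and>
      (\<forall>i j. i < j \<and> j < t \<longrightarrow> Max (I i) < Min (I j)) \<and>
      (\<lambda>i. Min (I i)) ` {..<t} \<in> F}"

definition bracket_norm :: "(nat \<Rightarrow> nat set set) \<Rightarrow> (nat \<Rightarrow> real) \<Rightarrow> (nat \<Rightarrow> real) \<Rightarrow> real" where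
  "bracket_norm F \<omega> x = (SUP n\<in>{1..}. \<omega> n * block_norm (F n) x)"

definition unit_vec :: "nat \<Rightarrow> nat \<Rightarrow> real" where
  "unit_vec n = (\<lambda>j. if j = n then 1 else 0)"

definition l1_spreading_model ::
  "nat set set \<Rightarrow> ((nat \<Rightarrow> real) \<Rightarrow> real) \<Rightarrow> (nat \<Rightarrow> nat \<Rightarrow> real) \<Rightarrow> bool" where
  "l1_spreading_model G N xs \<longleftrightarrow>
     bdd_above ((\<lambda>n. N (xs n)) ` {1..}) \<and>
     (\<exists>\<delta>>0. \<forall>E\<in>G. \<forall>a :: nat \<Rightarrow> real.
        (\<forall>i\<in>E. 0 \<le> a i) \<and> (\<Sum>i\<in>E. a i) = 1 \<longrightarrow>
        \<delta> \<le> N (\<lambda>j. \<Sum>i\<in>E. a i * xs i j))"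

definition weakly_null_wrt ::
  "nat set set \<Rightarrow> ((nat \<Rightarrow> real) \<Rightarrow> real) \<Rightarrow> (nat \<Rightarrow> nat \<Rightarrow> real) \<Rightarrow> bool" where
  "weakly_null_wrt G N xs \<longleftrightarrow>
     \<not> (\<exists>k :: nat \<Rightarrow> nat. strict_mono_on {1..} k \<and> (\<forall>n\<ge>1. 1 \<le> k n) \<and>
           l1_spreading_model G N (\<lambda>n. xs (k n)))"

end

theory Submission
  imports Defs
begin

abbreviation olt :: "'a rel \<Rightarrow> 'b rel \<Rightarrow> bool" (infix "<oo" 50) where "olt r s \<equiv> (r,s) \<in> ordLess"
abbreviation oiso :: "'a rel \<Rightarrow> 'b rel \<Rightarrow> bool" (infix "=oo" 50) where "oiso r s \<equiv> (r,s) \<in> ordIso"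
abbreviation oleq :: "'a rel \<Rightarrow> 'b rel \<Rightarrow> bool" (infix "<=oo" 50) where "oleq r s \<equiv> (r,s) \<in> ordLeq"

lemma wo_trans: "Well_order r \<Longrightarrow> (a,b) \<in> r \<Longrightarrow> (b,c) \<in> r \<Longrightarrow> (a,c) \<in> r"
proof -
  assume "Well_order r" "(a,b) \<in> r" "(b,c) \<in> r"
  moreover have "trans r" using \<open>Well_order r\<close> wo_rel.TRANS unfolding wo_rel_def by blast
  ultimately show ?thesis using transD by metis
qed

lemma wo_antisym: "Well_order r \<Longrightarrow> (a,b) \<in> r \<Longrightarrow> (b,a) \<in> r \<Longrightarrow> a = b"
proof -
  assume "Well_order r" "(a,b) \<in> r" "(b,a) \<in> r"
  moreover have "antisym r" using \<open>Well_order r\<close> wo_rel.ANTISYM unfolding wo_rel_def by blast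
  ultimately show ?thesis using antisymD by metis
qed

lemma wo_total: "Well_order r \<Longrightarrow> a \<in> Field r \<Longrightarrow> b \<in> Field r \<Longrightarrow> (a,b) \<in> r \<or> (b,a) \<in> r"
proof -
  assume "Well_order r" "a \<in> Field r" "b \<in> Field r"
  moreover have "\<forall>a \<in> Field r. \<forall>b \<in> Field r. (a,b) \<in> r \<or> (b,a) \<in> r"
    using \<open>Well_order r\<close> wo_rel.TOTALS unfolding wo_rel_def by blast
  ultimately show ?thesis by blast
qed

lemma wo_refl: "Well_order r \<Longrightarrow> a \<in> Field r \<Longrightarrow> (a,a) \<in> r"
  using wo_total[of r a a] by blast

lemma field_seg: "Well_order r \<Longrightarrow> Field (Restr r (underS r b)) = underS r b"
  by (simp add: Field_Restr_ofilter wo_rel.underS_ofilter wo_rel_def)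

lemma underS_sub_Field: "underS r b \<subseteq> Field r"
  by (auto simp: underS_def Field_def)

lemma Restr_Restr_sub: "B \<subseteq> A \<Longrightarrow> Restr (Restr r A) B = Restr r B"
  by auto

lemma seg_seg:
  assumes "Well_order r" "b \<in> underS r c"
  shows "Restr (Restr r (underS r c)) (underS (Restr r (underS r c)) b) = Restr r (underS r b)"
proof -
  have bc: "(b,c) \<in> r" "b \<noteq> c" using assms(2) unfolding underS_def by auto
  have 1: "underS (Restr r (underS r c)) b = underS r b"
  proof (rule set_eqI)
    fix x
    show "x \<in> underS (Restr r (underS r c)) b \<longleftrightarrow> x \<in> underS r b"
    proof
      assume "x \<in> underS (Restr r (underS r c)) b" then show "x \<in> underS r b"
        unfolding underS_def by auto
    next
      assume x: "x \<in> underS r b"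
      then have xb: "(x,b) \<in> r" "x \<noteq> b" unfolding underS_def by auto
      have "(x,c) \<in> r" using wo_trans[OF assms(1) xb(1) bc(1)] .
      moreover have "x \<noteq> c" using xb bc wo_antisym[OF assms(1)] by blast
      ultimately show "x \<in> underS (Restr r (underS r c)) b"
        using xb bc unfolding underS_def by auto
    qed
  qed
  have 2: "underS r b \<subseteq> underS r c"
  proof
    fix x assume x: "x \<in> underS r b"
    then have xb: "(x,b) \<in> r" "x \<noteq> b" unfolding underS_def by auto
    have "(x,c) \<in> r" using wo_trans[OF assms(1) xb(1) bc(1)] .
    moreover have "x \<noteq> c" using xb bc wo_antisym[OF assms(1)] by blast
    ultimately show "x \<in> underS r c" unfolding underS_def by auto
  qed
  show ?thesis unfolding 1 using Restr_Restr_sub[OF 2] .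
qed

lemma seg_less:
  assumes "Well_order r" "b \<in> underS r c"
  shows "Restr r (underS r b) <oo Restr r (underS r c)"
proof -
  have w: "Well_order (Restr r (underS r c))" using Well_order_Restr assms(1) by blast
  have "b \<in> Field (Restr r (underS r c))" using field_seg[OF assms(1)] assms(2) by simp
  then have "Restr (Restr r (underS r c)) (underS (Restr r (underS r c)) b) <oo Restr r (underS r c)"
    using underS_Restr_ordLess[OF w] by blast
  then show ?thesis using seg_seg[OF assms] by simp
qed

lemma seg_less_top:
  assumes "Well_order r" "b \<in> Field r"
  shows "Restr r (underS r b) <oo r"
  using underS_Restr_ordLess[OF assms(1)] assms(2) by blast

lemma ordLess_seg:
  assumes "z <oo r"
  shows "\<exists>b\<in>Field r. z =oo Restr r (underS r b)"
proof -
  have "Well_order r" "Well_order z" using assms unfolding ordLess_def by auto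
  then show ?thesis using ordLess_iff_ordIso_Restr assms by blast
qed

lemma succ_transfer:
  assumes "is_succ_of z r" "r =oo s"
  shows "is_succ_of z s"
proof -
  have s: "Well_order s" using assms(2) unfolding ordIso_def by auto
  have "z <oo s" using assms ordLess_ordIso_trans unfolding is_succ_of_def by blast
  moreover have "\<not> (z <oo w \<and> w <oo s)" for w :: "nat rel"
  proof
    assume "z <oo w \<and> w <oo s"
    then have "w <oo r" using ordLess_ordIso_trans ordIso_symmetric assms(2) by blast
    then show False using assms(1) \<open>z <oo w \<and> w <oo s\<close> unfolding is_succ_of_def by blast
  qed
  ultimately show ?thesis using assms s unfolding is_succ_of_def by blast
qed

lemma succ_unique:
  assumes "is_succ_of z1 r" "is_succ_of z2 s" "r =oo s"
  shows "z1 =oo z2"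
proof -
  have w: "Well_order z1" "Well_order z2" using assms unfolding is_succ_of_def by auto
  have a: "z1 <oo r" "z2 <oo s" using assms unfolding is_succ_of_def by auto
  have b: "z2 <oo r" using a(2) assms(3) ordLess_ordIso_trans ordIso_symmetric by blast
  have c: "z1 <oo s" using a(1) assms(3) ordLess_ordIso_trans by blast
  have "\<not> z1 <oo z2" using assms(1) b unfolding is_succ_of_def by blast
  moreover have "\<not> z2 <oo z1" using assms(2) c unfolding is_succ_of_def by blast
  ultimately have "z2 =oo z1" using w ordLess_or_ordLeq[of z1 z2] ordLeq_iff_ordLess_or_ordIso[of z2 z1] by blast
  then show ?thesis using ordIso_symmetric by blast
qed

lemma succ_nonempty: "is_succ_of z r \<Longrightarrow> Field r \<noteq> {}"
proof -
  assume "is_succ_of z r"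
  then have "z <oo r" unfolding is_succ_of_def by blast
  then obtain b where "b \<in> Field r" using ordLess_seg by blast
  then show ?thesis by blast
qed

lemma field_iso_empty: "r =oo s \<Longrightarrow> Field r = {} \<longleftrightarrow> Field s = {}"
  unfolding ordIso_def iso_def bij_betw_def by auto


lemma succ_lt: "is_succ_of z r \<Longrightarrow> z <oo r"
  unfolding is_succ_of_def by (elim conjE)
lemma succ_wo1: "is_succ_of z r \<Longrightarrow> Well_order z"
  unfolding is_succ_of_def by (elim conjE)
lemma succ_wo2: "is_succ_of z r \<Longrightarrow> Well_order r"
  unfolding is_succ_of_def by (elim conjE)
lemma succ_btw: "is_succ_of z r \<Longrightarrow> z <oo (w::nat rel) \<Longrightarrow> w <oo r \<Longrightarrow> False"
  unfolding is_succ_of_def by blast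

definition Dcons :: "nat set set \<Rightarrow> nat rel \<Rightarrow> nat set set" where
  "Dcons F = wfrec (ordLess :: (nat rel \<times> nat rel) set)
     (\<lambda>D r. if Field r = {} then F
            else if (\<exists>z. is_succ_of z r) then fderiv (D (SOME z. is_succ_of z r))
            else \<Inter> {D z | z. (z, r) \<in> ordLess})"

lemma Dcons_eq: "Dcons F r = (if Field r = {} then F
            else if (\<exists>z. is_succ_of z r) then fderiv (Dcons F (SOME z. is_succ_of z r))
            else \<Inter> {Dcons F z | z. z <oo r})"
proof -
  have w: "wf (ordLess :: (nat rel \<times> nat rel) set)" by (rule wf_ordLess)
  have 1: "Dcons F r = (if Field r = {} then F
            else if (\<exists>z. is_succ_of z r) then fderiv ((cut (Dcons F) ordLess r) (SOME z. is_succ_of z r))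
            else \<Inter> {(cut (Dcons F) ordLess r) z | z. (z, r) \<in> ordLess})"
    unfolding Dcons_def by (subst wfrec[OF w]) simp
  show ?thesis
  proof (cases "Field r = {}")
    case True then show ?thesis using 1 by simp
  next
    case F: False
    show ?thesis
    proof (cases "\<exists>z. is_succ_of z r")
      case True
      then have "is_succ_of (SOME z. is_succ_of z r) r" by (rule someI_ex)
      then have "(SOME z. is_succ_of z r) <oo r" by (rule succ_lt)
      then show ?thesis using 1 F True by (simp add: cut_apply)
    next
      case False
      have "{(cut (Dcons F) ordLess r) z | z. (z, r) \<in> ordLess} = (cut (Dcons F) ordLess r) ` {z. z <oo r}"
        by blast
      also have "\<dots> = Dcons F ` {z. z <oo r}" by (rule image_cong) (auto simp: cut_apply)
      also have "\<dots> = {Dcons F z | z. z <oo r}" by blast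
      finally have "{(cut (Dcons F) ordLess r) z | z. (z, r) \<in> ordLess} = {Dcons F z | z. z <oo r}" .
      then show ?thesis using 1 F False by simp
    qed
  qed
qed

lemma Dcons_iso:
  "Well_order r \<Longrightarrow> Well_order s \<Longrightarrow> r =oo s \<Longrightarrow> Dcons F r = Dcons F s"
proof (induction r arbitrary: s rule: wf_induct[OF wf_ordLess])
  case (1 r)
  note IH = 1(1)
  show ?case
  proof (cases "Field r = {}")
    case True
    then have "Field s = {}" using field_iso_empty[OF 1(4)] by simp
    then show ?thesis using True by (simp add: Dcons_eq[of F r] Dcons_eq[of F s])
  next
    case Fr: False
    then have Fs: "Field s \<noteq> {}" using field_iso_empty[OF 1(4)] by simp
    show ?thesis
    proof (cases "\<exists>z. is_succ_of z r")
      case True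
      then obtain z where z: "is_succ_of z r" by blast
      have zs: "is_succ_of z s" using succ_transfer[OF z 1(4)] .
      have s1: "is_succ_of (SOME z. is_succ_of z r) r" using True by (rule someI_ex)
      have s2: "is_succ_of (SOME z. is_succ_of z s) s" using someI[of "\<lambda>z. is_succ_of z s" z] zs by blast
      have iso: "(SOME z. is_succ_of z r) =oo (SOME z. is_succ_of z s)"
        using succ_unique[OF s1 s2 1(4)] .
      have lt: "(SOME z. is_succ_of z r) <oo r" using succ_lt[OF s1] .
      have ww: "Well_order (SOME z. is_succ_of z r)" "Well_order (SOME z. is_succ_of z s)"
        using succ_wo1[OF s1] succ_wo1[OF s2] by auto
      have "Dcons F (SOME z. is_succ_of z r) = Dcons F (SOME z. is_succ_of z s)"
        using IH[rule_format, OF lt] ww iso by blast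
      moreover have "\<exists>z. is_succ_of z s" using zs by blast
      moreover have "Dcons F r = fderiv (Dcons F (SOME z. is_succ_of z r))"
        using Fr True by (subst Dcons_eq) simp
      ultimately show ?thesis using Fs by (subst (2) Dcons_eq) simp
    next
      case False
      have nos: "\<not> (\<exists>z. is_succ_of z s)"
      proof
        assume "\<exists>z. is_succ_of z s"
        then obtain z where "is_succ_of z s" by blast
        then have "is_succ_of z r" using succ_transfer ordIso_symmetric[OF 1(4)] by blast
        then show False using False by blast
      qed
      have iff: "z <oo r \<longleftrightarrow> z <oo s" for z :: "nat rel"
      proof
        assume "z <oo r" then show "z <oo s" using ordLess_ordIso_trans[of z r s] 1(4) by blast
      next
        assume "z <oo s" then show "z <oo r" using ordLess_ordIso_trans[of z s r] ordIso_symmetric[OF 1(4)] by blast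
      qed
      have "{Dcons F z | z. z <oo r} = {Dcons F z | z. z <oo s}" by (simp only: iff)
      then show ?thesis using Fr Fs False nos by (simp add: Dcons_eq[of F r] Dcons_eq[of F s])
    qed
  qed
qed

lemma Dcons_derivs: "derivs F (Dcons F)"
  unfolding derivs_def
proof (intro conjI allI impI)
  fix r s :: "nat rel"
  assume "Well_order r \<and> Well_order s \<and> r =oo s"
  then show "Dcons F r = Dcons F s" using Dcons_iso by blast
next
  fix r :: "nat rel" assume "is_zero_ord r"
  then show "Dcons F r = F" unfolding is_zero_ord_def by (simp add: Dcons_eq[of F r])
next
  fix z r :: "nat rel" assume z: "is_succ_of z r"
  have Fr: "Field r \<noteq> {}" using succ_nonempty[OF z] .
  have s1: "is_succ_of (SOME z. is_succ_of z r) r" using someI[of "\<lambda>z. is_succ_of z r" z] z by blast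
  have wr: "Well_order r" using succ_wo2[OF z] .
  have iso: "(SOME z. is_succ_of z r) =oo z" using succ_unique[OF s1 z ordIso_reflexive[OF wr]] .
  have w1: "Well_order (SOME z. is_succ_of z r)" using succ_wo1[OF s1] .
  have w2: "Well_order z" using succ_wo1[OF z] .
  have "Dcons F (SOME z. is_succ_of z r) = Dcons F z"
    using Dcons_iso[OF w1 w2 iso] .
  then show "Dcons F r = fderiv (Dcons F z)" using Fr z by (auto simp add: Dcons_eq[of F r])
next
  fix r :: "nat rel" assume "is_limit_ord r"
  then show "Dcons F r = \<Inter> {Dcons F z | z. z <oo r}"
    unfolding is_limit_ord_def by (simp add: Dcons_eq[of F r])
qed

lemma derivs_isoD: "derivs F D \<Longrightarrow> Well_order r \<Longrightarrow> Well_order s \<Longrightarrow> r =oo s \<Longrightarrow> D r = D s"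
  unfolding derivs_def by blast
lemma derivs_zeroD: "derivs F D \<Longrightarrow> is_zero_ord r \<Longrightarrow> D r = F"
  unfolding derivs_def by blast
lemma derivs_succD: "derivs F D \<Longrightarrow> is_succ_of z r \<Longrightarrow> D r = fderiv (D z)"
  unfolding derivs_def by blast
lemma derivs_limD: "derivs F D \<Longrightarrow> is_limit_ord r \<Longrightarrow> D r = \<Inter> {D z | z. z <oo r}"
  unfolding derivs_def by blast

lemma fderiv_mem: "E \<in> D \<Longrightarrow> E' \<in> D \<Longrightarrow> E \<subset> E' \<Longrightarrow> E \<in> fderiv D"
  unfolding fderiv_def by blast

lemma derivs_L:
  assumes d: "derivs F D" and w: "Well_order X" and E: "E \<in> F" "E \<notin> D X"
    and all: "\<forall>b\<in>Field X. E \<in> D (Restr X (underS X b))"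
  shows "\<exists>b\<in>Field X. D X = fderiv (D (Restr X (underS X b)))"
proof (cases "Field X = {}")
  case True
  then have "is_zero_ord X" using w unfolding is_zero_ord_def by simp
  then have "D X = F" using derivs_zeroD[OF d] by blast
  then show ?thesis using E by simp
next
  case F: False
  show ?thesis
  proof (cases "\<exists>z. is_succ_of z X")
    case True
    then obtain z where z: "is_succ_of z X" by blast
    then have "z <oo X" by (rule succ_lt)
    then obtain b where b: "b \<in> Field X" "z =oo Restr X (underS X b)" using ordLess_seg by blast
    have wz: "Well_order z" using succ_wo1[OF z] .
    have "D z = D (Restr X (underS X b))"
      using derivs_isoD[OF d wz Well_order_Restr[OF w] b(2)] .
    moreover have "D X = fderiv (D z)" using derivs_succD[OF d z] .
    ultimately show ?thesis using b(1) by auto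
  next
    case False
    then have lim: "is_limit_ord X" using w F unfolding is_limit_ord_def by blast
    then have DX: "D X = \<Inter> {D z | z. z <oo X}" using derivs_limD[OF d] by blast
    then obtain z where z: "z <oo X" "E \<notin> D z" using E(2) by blast
    then obtain b where b: "b \<in> Field X" "z =oo Restr X (underS X b)" using ordLess_seg by blast
    have wz: "Well_order z" using z unfolding ordLess_def by blast
    have "D z = D (Restr X (underS X b))"
      using derivs_isoD[OF d wz Well_order_Restr[OF w] b(2)] .
    then show ?thesis using all b(1) z(2) by simp
  qed
qed

lemma derivs_C:
  assumes d: "derivs F D" and w: "Well_order X" and E: "E \<in> F" "E \<notin> D X" and E': "E \<subset> E'"
    and all: "\<forall>b\<in>Field X. E \<in> D (Restr X (underS X b))"
  shows "\<exists>b\<in>Field X. E' \<notin> D (Restr X (underS X b))"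
proof -
  obtain b where b: "b \<in> Field X" "D X = fderiv (D (Restr X (underS X b)))"
    using derivs_L[OF d w E all] by blast
  have "E' \<notin> D (Restr X (underS X b))"
  proof
    assume "E' \<in> D (Restr X (underS X b))"
    then have "E \<in> D X" using fderiv_mem[OF _ _ E'] all b by simp
    then show False using E by simp
  qed
  then show ?thesis using b(1) by blast
qed

lemma rank_exists:
  fixes F :: "nat set set" and W :: "'b rel" and \<xi> :: "nat rel"
  assumes d: "derivs F D" and lt: "\<xi> <oo W" and e: "D \<xi> = {}"
  shows "\<exists>\<rho>. \<forall>E\<in>F. \<forall>E'\<in>F. E \<subset> E' \<longrightarrow> (\<rho> E', \<rho> E) \<in> W \<and> \<rho> E' \<noteq> \<rho> E"
proof -
  have wW: "Well_order W" and wx: "Well_order \<xi>" using lt unfolding ordLess_def by auto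
  obtain f0 where f0: "f0 \<in> Field W" "\<xi> =oo Restr W (underS W f0)"
    using ordLess_iff_ordIso_Restr[OF wW wx] lt by blast
  obtain h where h: "iso \<xi> (Restr W (underS W f0)) h" using f0(2) unfolding ordIso_def by blast
  have hb: "bij_betw h (Field \<xi>) (Field (Restr W (underS W f0)))"
    and hiff: "\<forall>a\<in>Field \<xi>. \<forall>b\<in>Field \<xi>. (a, b) \<in> \<xi> \<longleftrightarrow> (h a, h b) \<in> Restr W (underS W f0)"
    using h unfolding iso_iff2 by auto
  have hinj: "inj_on h (Field \<xi>)" using hb unfolding bij_betw_def by blast
  have hin: "h a \<in> underS W f0" if "a \<in> Field \<xi>" for a
  proof -
    have "h a \<in> Field (Restr W (underS W f0))" using hb that unfolding bij_betw_def by blast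
    then show ?thesis using Field_Restr_subset[of W "underS W f0"] by (rule subsetD[rotated])
  qed
  have hmono: "(h a, h b) \<in> W" if "a \<in> Field \<xi>" "b \<in> Field \<xi>" "(a,b) \<in> \<xi>" for a b
    using hiff that by blast
  define seg where "seg b = Restr \<xi> (underS \<xi> b)" for b
  define B where "B E = {b \<in> Field \<xi>. E \<notin> D (seg b)}" for E
  define \<rho> where "\<rho> E = (if B E = {} then f0 else h (wo_rel.minim \<xi> (B E)))" for E
  have wor: "wo_rel \<xi>" using wx unfolding wo_rel_def .
  have Bsub: "B E \<subseteq> Field \<xi>" for E unfolding B_def by blast
  have mi: "wo_rel.minim \<xi> (B E) \<in> B E" if "B E \<noteq> {}" for E
    using wo_rel.minim_in[OF wor Bsub that] .
  have ml: "(wo_rel.minim \<xi> (B E), b) \<in> \<xi>" if "b \<in> B E" for E b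
    using wo_rel.minim_least[OF wor Bsub that] .
  have key: "(\<rho> E', \<rho> E) \<in> W \<and> \<rho> E' \<noteq> \<rho> E" if EF: "E \<in> F" and EE: "E \<subset> E'" for E E'
  proof (cases "B E = {}")
    case True
    have all: "\<forall>b\<in>Field \<xi>. E \<in> D (Restr \<xi> (underS \<xi> b))" using True unfolding B_def seg_def by blast
    obtain b where b: "b \<in> Field \<xi>" "E' \<notin> D (Restr \<xi> (underS \<xi> b))"
      using derivs_C[OF d wx EF _ EE all] e by blast
    then have ne: "B E' \<noteq> {}" unfolding B_def seg_def by blast
    have "wo_rel.minim \<xi> (B E') \<in> Field \<xi>" using mi[OF ne] Bsub by blast
    then have "h (wo_rel.minim \<xi> (B E')) \<in> underS W f0" using hin by blast
    then show ?thesis using True ne unfolding \<rho>_def underS_def by auto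
  next
    case False
    define \<beta> where "\<beta> = wo_rel.minim \<xi> (B E)"
    have \<beta>: "\<beta> \<in> B E" using mi[OF False] unfolding \<beta>_def .
    have \<beta>F: "\<beta> \<in> Field \<xi>" using \<beta> Bsub by blast
    define X where "X = seg \<beta>"
    have wX: "Well_order X" unfolding X_def seg_def using Well_order_Restr[OF wx] .
    have FX: "Field X = underS \<xi> \<beta>" unfolding X_def seg_def using field_seg[OF wx] .
    have nX: "E \<notin> D X" using \<beta> unfolding B_def X_def by blast
    have all: "\<forall>b\<in>Field X. E \<in> D (Restr X (underS X b))"
    proof
      fix b assume b: "b \<in> Field X"
      then have bu: "b \<in> underS \<xi> \<beta>" using FX by simp
      have rw: "Restr X (underS X b) = seg b" unfolding X_def seg_def using seg_seg[OF wx bu] .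
      have "b \<notin> B E"
      proof
        assume "b \<in> B E"
        then have "(\<beta>, b) \<in> \<xi>" using ml unfolding \<beta>_def by blast
        moreover have "(b, \<beta>) \<in> \<xi>" "b \<noteq> \<beta>" using bu unfolding underS_def by auto
        ultimately show False using wo_antisym[OF wx] by blast
      qed
      moreover have "b \<in> Field \<xi>" using underS_sub_Field[of \<xi> \<beta>] bu by blast
      ultimately show "E \<in> D (Restr X (underS X b))" unfolding rw B_def by blast
    qed
    obtain b where b: "b \<in> Field X" "E' \<notin> D (Restr X (underS X b))"
      using derivs_C[OF d wX EF nX EE all] by blast
    have bu: "b \<in> underS \<xi> \<beta>" using FX b(1) by simp
    have rw: "Restr X (underS X b) = seg b" unfolding X_def seg_def using seg_seg[OF wx bu] .
    have bF: "b \<in> Field \<xi>" using underS_sub_Field[of \<xi> \<beta>] bu by blast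
    have bB: "b \<in> B E'" using b(2) rw bF unfolding B_def by simp
    then have ne: "B E' \<noteq> {}" by blast
    define \<beta>' where "\<beta>' = wo_rel.minim \<xi> (B E')"
    have \<beta>'F: "\<beta>' \<in> Field \<xi>" using mi[OF ne] Bsub unfolding \<beta>'_def by blast
    have 1: "(\<beta>', b) \<in> \<xi>" using ml[OF bB] unfolding \<beta>'_def .
    have 2: "(b, \<beta>) \<in> \<xi>" "b \<noteq> \<beta>" using bu unfolding underS_def by auto
    have 3: "(\<beta>', \<beta>) \<in> \<xi>" using wo_trans[OF wx 1 2(1)] .
    have 4: "\<beta>' \<noteq> \<beta>"
    proof
      assume "\<beta>' = \<beta>"
      then have "(\<beta>, b) \<in> \<xi>" using 1 by simp
      then show False using 2 wo_antisym[OF wx] by blast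
    qed
    have "(h \<beta>', h \<beta>) \<in> W" using hmono[OF \<beta>'F \<beta>F 3] .
    moreover have "h \<beta>' \<noteq> h \<beta>" using 4 hinj \<beta>'F \<beta>F unfolding inj_on_def by blast
    ultimately show ?thesis using False ne unfolding \<rho>_def \<beta>_def \<beta>'_def by simp
  qed
  show ?thesis using key by blast
qed


definition fsupp :: "nat rel \<Rightarrow> (nat \<Rightarrow> nat) \<Rightarrow> bool" where
  "fsupp s f \<longleftrightarrow> finite {x. f x \<noteq> 0} \<and> (\<forall>x. x \<notin> Field s \<longrightarrow> f x = 0)"

definition opl :: "nat rel \<Rightarrow> (nat \<Rightarrow> nat) \<Rightarrow> (nat \<Rightarrow> nat) \<Rightarrow> bool" where
  "opl s f g \<longleftrightarrow> fsupp s f \<and> fsupp s g \<and>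
     (\<exists>b\<in>Field s. f b < g b \<and> (\<forall>c\<in>Field s. (b,c) \<in> s \<and> b \<noteq> c \<longrightarrow> f c = g c))"

definition ranked :: "nat rel \<Rightarrow> nat set set \<Rightarrow> (nat set \<Rightarrow> nat \<Rightarrow> nat) \<Rightarrow> bool" where
  "ranked s G \<rho> \<longleftrightarrow> (\<forall>A\<in>G. \<forall>B\<in>G. A \<subset> B \<longrightarrow> opl s (\<rho> B) (\<rho> A))"

definition good_avg :: "nat set \<Rightarrow> (nat \<Rightarrow> real) \<Rightarrow> bool" where
  "good_avg E a \<longleftrightarrow> finite E \<and> E \<noteq> {} \<and> (\<forall>i\<in>E. 0 \<le> a i) \<and> sum a E = 1"

definition Kprop :: "(nat rel \<Rightarrow> nat set set) \<Rightarrow> nat rel \<Rightarrow> bool" where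
  "Kprop S r \<longleftrightarrow> (\<forall>(s::nat rel) (\<G>::(nat set set \<times> (nat set \<Rightarrow> nat \<Rightarrow> nat)) set) (m::nat) (\<epsilon>::real).
      s <=oo r \<and> finite \<G> \<and> \<epsilon> > 0 \<and> (\<forall>p\<in>\<G>. hereditary (fst p) \<and> ranked s (fst p) (snd p)) \<longrightarrow>
      (\<exists>E a. E \<in> S r \<and> good_avg E a \<and> E \<subseteq> {m<..} \<and> (\<forall>p\<in>\<G>. \<forall>A\<in>fst p. A \<subseteq> E \<longrightarrow> sum a A < \<epsilon>)))"

lemma KpropD:
  assumes "Kprop S r" "s <=oo r" "finite \<G>" "\<epsilon> > 0" "\<forall>p\<in>\<G>. hereditary (fst p) \<and> ranked s (fst p) (snd p)"
  shows "\<exists>E a. E \<in> S r \<and> good_avg E a \<and> E \<subseteq> {m<..} \<and> (\<forall>p\<in>\<G>. \<forall>A\<in>fst p. A \<subseteq> E \<longrightarrow> sum a A < \<epsilon>)"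
  using assms unfolding Kprop_def by blast

lemma KpropI:
  assumes "\<And>(s::nat rel) (\<G>::(nat set set \<times> (nat set \<Rightarrow> nat \<Rightarrow> nat)) set) (m::nat) (\<epsilon>::real).
      s <=oo r \<Longrightarrow> finite \<G> \<Longrightarrow> \<epsilon> > 0 \<Longrightarrow> (\<forall>p\<in>\<G>. hereditary (fst p) \<and> ranked s (fst p) (snd p)) \<Longrightarrow>
      (\<exists>E a. E \<in> S r \<and> good_avg E a \<and> E \<subseteq> {m<..} \<and> (\<forall>p\<in>\<G>. \<forall>A\<in>fst p. A \<subseteq> E \<longrightarrow> sum a A < \<epsilon>))"
  shows "Kprop S r"
  unfolding Kprop_def using assms by blast

lemma hereditaryD: "hereditary G \<Longrightarrow> A \<in> G \<Longrightarrow> B \<subseteq> A \<Longrightarrow> B \<in> G"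
  unfolding hereditary_def by blast

lemma rankedD: "ranked s G \<rho> \<Longrightarrow> A \<in> G \<Longrightarrow> B \<in> G \<Longrightarrow> A \<subset> B \<Longrightarrow> opl s (\<rho> B) (\<rho> A)"
  unfolding ranked_def by blast

lemma oplD: "opl s f g \<Longrightarrow> fsupp s f \<and> fsupp s g \<and>
     (\<exists>b\<in>Field s. f b < g b \<and> (\<forall>c\<in>Field s. (b,c) \<in> s \<and> b \<noteq> c \<longrightarrow> f c = g c))"
  unfolding opl_def by blast

lemma top_mono:
  assumes "opl s f g" "\<forall>x\<in>Field s. (x,a) \<in> s" "a \<in> Field s"
  shows "f a \<le> g a"
proof -
  obtain b where b: "b \<in> Field s" "f b < g b" "\<forall>c\<in>Field s. (b,c) \<in> s \<and> b \<noteq> c \<longrightarrow> f c = g c"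
    using oplD[OF assms(1)] by blast
  show ?thesis
  proof (cases "b = a")
    case True then show ?thesis using b by simp
  next
    case False
    then have "f a = g a" using b(3) assms(2,3) b(1) by blast
    then show ?thesis by simp
  qed
qed

lemma count_drops:
  fixes t :: "nat \<Rightarrow> nat"
  assumes "\<forall>l. t (Suc l) \<le> t l"
  shows "card {l. l < p \<and> t (Suc l) < t l} + t p \<le> t 0"
proof (induction p)
  case 0 then show ?case by simp
next
  case (Suc p)
  have eq: "{l. l < Suc p \<and> t (Suc l) < t l} = {l. l < p \<and> t (Suc l) < t l} \<union> (if t (Suc p) < t p then {p} else {})"
    by (auto simp: less_Suc_eq)
  have fin: "finite {l. l < p \<and> t (Suc l) < t l}" by simp
  show ?case
  proof (cases "t (Suc p) < t p")
    case True
    have "card {l. l < Suc p \<and> t (Suc l) < t l} = Suc (card {l. l < p \<and> t (Suc l) < t l})"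
      unfolding eq using True fin by simp
    then show ?thesis using Suc True by simp
  next
    case False
    have "card {l. l < Suc p \<and> t (Suc l) < t l} = card {l. l < p \<and> t (Suc l) < t l}"
      unfolding eq using False by simp
    moreover have "t (Suc p) \<le> t p" using assms by blast
    ultimately show ?thesis using Suc.IH False by linarith
  qed
qed

lemma fam_prodI:
  fixes k :: nat and Ef :: "nat \<Rightarrow> nat set"
  assumes "X = \<Union> (Ef ` {..<k})" "\<forall>i<k. Ef i \<noteq> {} \<and> Ef i \<in> F"
    "\<forall>i j. i < j \<and> j < k \<longrightarrow> Max (Ef i) < Min (Ef j)" "(\<lambda>i. Min (Ef i)) ` {..<k} \<in> G"
  shows "X \<in> fam_prod G F"
  unfolding fam_prod_def
  apply (rule UnI2, rule CollectI, rule exI[of _ k], rule exI[of _ Ef])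
  using assms by simp

lemma succ_incl:
  assumes "E \<in> Sz" "finite E" "E \<noteq> {}" "E \<subseteq> {1..}"
  shows "E \<in> fam_prod schreier1 Sz"
proof (rule fam_prodI[where Ef="\<lambda>i. E" and k=1])
  have "(\<lambda>i::nat. Min E) ` {..<1} = {Min E}" by auto
  moreover have "Min E \<ge> 1" using assms Min_in by blast
  ultimately show "(\<lambda>i::nat. Min E) ` {..<1} \<in> schreier1" unfolding schreier1_def by auto
qed (use assms in auto)


definition Hf :: "nat set set \<Rightarrow> (nat set \<Rightarrow> nat \<Rightarrow> nat) \<Rightarrow> nat \<Rightarrow> nat set \<Rightarrow> nat set set" where
  "Hf G \<rho> a P = {C. C \<inter> P = {} \<and> P \<union> C \<in> G \<and> \<rho> (P \<union> C) a = \<rho> P a}"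

definition Rf :: "(nat set \<Rightarrow> nat \<Rightarrow> nat) \<Rightarrow> nat \<Rightarrow> nat set \<Rightarrow> nat set \<Rightarrow> nat \<Rightarrow> nat" where
  "Rf \<rho> a P = (\<lambda>C x. if x = a then 0 else \<rho> (P \<union> C) x)"

lemma top_le_sub:
  assumes "ranked s G \<rho>" "X \<in> G" "Y \<in> G" "X \<subseteq> Y" "\<forall>x\<in>Field s. (x,a) \<in> s" "a \<in> Field s"
  shows "\<rho> Y a \<le> \<rho> X a"
proof (cases "X = Y")
  case True then show ?thesis by simp
next
  case False
  then have "X \<subset> Y" using assms(4) by blast
  then have "opl s (\<rho> Y) (\<rho> X)" using rankedD[OF assms(1,2,3)] by blast
  then show ?thesis using top_mono assms(5,6) by blast
qed

lemma H_her:
  assumes her: "hereditary G" and rk: "ranked s G \<rho>"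
    and amax: "\<forall>x\<in>Field s. (x,a) \<in> s" and aF: "a \<in> Field s"
  shows "hereditary (Hf G \<rho> a P)"
  unfolding hereditary_def
proof (intro ballI allI impI)
  fix C C' assume C: "C \<in> Hf G \<rho> a P" and sub: "C' \<subseteq> C"
  have c1: "C \<inter> P = {}" "P \<union> C \<in> G" "\<rho> (P \<union> C) a = \<rho> P a" using C unfolding Hf_def by auto
  have d1: "C' \<inter> P = {}" using c1(1) sub by blast
  have d2: "P \<union> C' \<in> G" using hereditaryD[OF her c1(2)] sub by blast
  have PG: "P \<in> G" using hereditaryD[OF her c1(2)] by blast
  have "\<rho> (P \<union> C) a \<le> \<rho> (P \<union> C') a" using top_le_sub[OF rk d2 c1(2) _ amax aF] sub by blast
  moreover have "\<rho> (P \<union> C') a \<le> \<rho> P a" using top_le_sub[OF rk PG d2 _ amax aF] by blast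
  ultimately have "\<rho> (P \<union> C') a = \<rho> P a" using c1(3) by linarith
  then show "C' \<in> Hf G \<rho> a P" using d1 d2 unfolding Hf_def by blast
qed

lemma H_rank:
  assumes ws: "Well_order s" and rk: "ranked s G \<rho>"
    and amax: "\<forall>x\<in>Field s. (x,a) \<in> s" and aF: "a \<in> Field s"
  shows "ranked (Restr s (underS s a)) (Hf G \<rho> a P) (Rf \<rho> a P)"
  unfolding ranked_def
proof (intro ballI impI)
  fix C C' assume C: "C \<in> Hf G \<rho> a P" and C': "C' \<in> Hf G \<rho> a P" and lt: "C \<subset> C'"
  have c1: "C \<inter> P = {}" "P \<union> C \<in> G" "\<rho> (P \<union> C) a = \<rho> P a" using C unfolding Hf_def by auto
  have c2: "C' \<inter> P = {}" "P \<union> C' \<in> G" "\<rho> (P \<union> C') a = \<rho> P a" using C' unfolding Hf_def by auto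
  have "P \<union> C \<subset> P \<union> C'" using lt c2(1) by blast
  then have op: "opl s (\<rho> (P \<union> C')) (\<rho> (P \<union> C))" using rankedD[OF rk c1(2) c2(2)] by blast
  define f where "f = \<rho> (P \<union> C')"
  define g where "g = \<rho> (P \<union> C)"
  have fa: "f a = g a" using c1(3) c2(3) unfolding f_def g_def by simp
  have fs: "fsupp s f" "fsupp s g" using oplD[OF op] unfolding f_def g_def by auto
  obtain b where b: "b \<in> Field s" "f b < g b" "\<forall>c\<in>Field s. (b,c) \<in> s \<and> b \<noteq> c \<longrightarrow> f c = g c"
    using oplD[OF op] unfolding f_def g_def by blast
  have FS0: "Field (Restr s (underS s a)) = underS s a" using field_seg[OF ws] .
  have inS: "x \<in> underS s a" if "x \<in> Field s" "x \<noteq> a" for x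
    using amax that unfolding underS_def by blast
  have R1: "Rf \<rho> a P C' = (\<lambda>x. if x = a then 0 else f x)" unfolding Rf_def f_def by simp
  have R2: "Rf \<rho> a P C = (\<lambda>x. if x = a then 0 else g x)" unfolding Rf_def g_def by simp
  have fsu: "fsupp (Restr s (underS s a)) (\<lambda>x. if x = a then 0 else h x)" if "fsupp s h" for h
  proof -
    have "{x. (if x = a then 0 else h x) \<noteq> 0} \<subseteq> {x. h x \<noteq> 0}" by auto
    then have "finite {x. (if x = a then 0 else h x) \<noteq> 0}"
      using that unfolding fsupp_def by (meson finite_subset)
    moreover have "(if x = a then 0 else h x) = 0" if "x \<notin> underS s a" for x
    proof (cases "x = a")
      case False
      then have "x \<notin> Field s" using inS that by blast
      then show ?thesis using \<open>fsupp s h\<close> unfolding fsupp_def by simp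
    qed simp
    ultimately show ?thesis unfolding fsupp_def FS0 by blast
  qed
  have ba: "b \<noteq> a" using b(2) fa by auto
  have bS: "b \<in> underS s a" using inS[OF b(1) ba] .
  have "\<forall>c\<in>Field (Restr s (underS s a)). (b,c) \<in> Restr s (underS s a) \<and> b \<noteq> c \<longrightarrow>
      (if c = a then 0 else f c) = (if c = a then 0 else g c)"
  proof (intro ballI impI)
    fix c assume c: "c \<in> Field (Restr s (underS s a))" "(b,c) \<in> Restr s (underS s a) \<and> b \<noteq> c"
    have "c \<in> Field s" using c(1) FS0 underS_sub_Field[of s a] by blast
    moreover have "(b,c) \<in> s" using c(2) by blast
    ultimately have "f c = g c" using b(3) c(2) by blast
    then show "(if c = a then 0 else f c) = (if c = a then 0 else g c)" by simp
  qed
  moreover have "(if b = a then 0 else f b) < (if b = a then 0 else g b)" using ba b(2) by simp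
  moreover have "b \<in> Field (Restr s (underS s a))" using FS0 bS by simp
  ultimately show "opl (Restr s (underS s a)) (Rf \<rho> a P C') (Rf \<rho> a P C)"
    unfolding R1 R2 opl_def using fsu[OF fs(1)] fsu[OF fs(2)] by blast
qed

lemma sum_split_blocks:
  fixes al :: "nat \<Rightarrow> nat \<Rightarrow> real" and p :: nat
  assumes "finite A"
  shows "sum (\<lambda>i. \<Sum>l<p. if i \<in> El l then al l i / real p else 0) A = (\<Sum>l<p. sum (al l) (A \<inter> El l) / real p)"
proof -
  have "sum (\<lambda>i. \<Sum>l<p. if i \<in> El l then al l i / real p else 0) A
      = (\<Sum>l<p. \<Sum>i\<in>A. if i \<in> El l then al l i / real p else 0)" by (rule sum.swap)
  also have "\<dots> = (\<Sum>l<p. sum (\<lambda>i. al l i / real p) (A \<inter> El l))"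
    by (rule sum.cong[OF refl]) (simp add: sum.inter_restrict[OF assms])
  also have "\<dots> = (\<Sum>l<p. sum (al l) (A \<inter> El l) / real p)"
    by (simp add: sum_divide_distrib)
  finally show ?thesis .
qed

lemma sum_indicator_card:
  "(\<Sum>l<(p::nat). if Q l then (1::real) else 0) = real (card {l. l < p \<and> Q l})"
proof -
  have "(\<Sum>l<p. if Q l then (1::real) else 0) = sum (\<lambda>_. 1) {l \<in> {..<p}. Q l}"
    by (rule sum.inter_filter[symmetric]) simp
  also have "\<dots> = real (card {l \<in> {..<p}. Q l})" by simp
  also have "{l \<in> {..<p}. Q l} = {l. l < p \<and> Q l}" by auto
  finally show ?thesis .
qed

lemma succ_main:
  fixes s z :: "nat rel" and \<G> :: "(nat set set \<times> (nat set \<Rightarrow> nat \<Rightarrow> nat)) set"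
    and \<epsilon> :: real and m :: nat
  assumes ws: "Well_order s" and aF: "a \<in> Field s" and amax: "\<forall>x\<in>Field s. (x,a) \<in> s"
    and Kz: "Kprop S z" and s0z: "Restr s (underS s a) <=oo z"
    and fin: "finite \<G>" and eps: "\<epsilon> > 0"
    and hr: "\<forall>q\<in>\<G>. hereditary (fst q) \<and> ranked s (fst q) (snd q)"
  shows "\<exists>E w. E \<in> fam_prod schreier1 (S z) \<and> good_avg E w \<and> E \<subseteq> {m<..} \<and>
           (\<forall>q\<in>\<G>. \<forall>A\<in>fst q. A \<subseteq> E \<longrightarrow> sum w A < \<epsilon>)"
proof -
  define s0 where "s0 = Restr s (underS s a)"
  define GM where "GM M = (\<lambda>(q,P). (Hf (fst q) (snd q) a P, Rf (snd q) a P)) ` (\<G> \<times> Pow {..M})" for M :: nat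
  have finM: "finite (GM M)" for M unfolding GM_def using fin by simp
  have hrM: "\<forall>q\<in>GM M. hereditary (fst q) \<and> ranked s0 (fst q) (snd q)" for M
  proof
    fix q assume "q \<in> GM M"
    then obtain q0 P where q0: "q0 \<in> \<G>" "q = (Hf (fst q0) (snd q0) a P, Rf (snd q0) a P)"
      unfolding GM_def by auto
    have "hereditary (fst q0)" "ranked s (fst q0) (snd q0)" using hr q0(1) by auto
    then show "hereditary (fst q) \<and> ranked s0 (fst q) (snd q)"
      using H_her[OF _ _ amax aF] H_rank[OF ws _ amax aF] q0(2) unfolding s0_def by simp
  qed
  have eps2: "\<epsilon>/2 > 0" using eps by simp
  have step: "\<forall>M. \<exists>E b. E \<in> S z \<and> good_avg E b \<and> E \<subseteq> {M<..} \<and>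
      (\<forall>q\<in>GM M. \<forall>A\<in>fst q. A \<subseteq> E \<longrightarrow> sum b A < \<epsilon>/2)"
  proof
    fix M
    show "\<exists>E b. E \<in> S z \<and> good_avg E b \<and> E \<subseteq> {M<..} \<and>
      (\<forall>q\<in>GM M. \<forall>A\<in>fst q. A \<subseteq> E \<longrightarrow> sum b A < \<epsilon>/2)"
      using KpropD[OF Kz s0z[folded s0_def] finM eps2 hrM] by blast
  qed
  obtain stE where h1: "\<forall>M. \<exists>b. stE M \<in> S z \<and> good_avg (stE M) b \<and> stE M \<subseteq> {M<..} \<and>
      (\<forall>q\<in>GM M. \<forall>A\<in>fst q. A \<subseteq> stE M \<longrightarrow> sum b A < \<epsilon>/2)"
    using choice[OF step] by blast
  obtain stb where st: "\<forall>M. stE M \<in> S z \<and> good_avg (stE M) (stb M) \<and> stE M \<subseteq> {M<..} \<and>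
      (\<forall>q\<in>GM M. \<forall>A\<in>fst q. A \<subseteq> stE M \<longrightarrow> sum (stb M) A < \<epsilon>/2)"
    using choice[OF h1] by blast
  define C0 where "C0 = Max (insert 0 ((\<lambda>q. snd q {} a) ` \<G>))"
  have C0b: "snd q {} a \<le> C0" if "q \<in> \<G>" for q
    unfolding C0_def using fin that by (intro Max_ge) auto
  define p where "p = nat \<lceil>2 * real C0 / \<epsilon>\<rceil> + 1"
  have p1: "p \<ge> 1" unfolding p_def by simp
  have pbig: "real p > 2 * real C0 / \<epsilon>" unfolding p_def by linarith
  have pC: "real C0 / real p < \<epsilon>/2"
  proof -
    have pp: "real p > 0" using p1 by simp
    have "2 * real C0 < real p * \<epsilon>" using pbig eps by (simp add: field_simps)
    then show ?thesis using pp by (simp add: field_simps)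
  qed
  define Ms where "Ms = rec_nat (max m p) (\<lambda>l M. Max (stE M))"
  have Ms0: "Ms 0 = max m p" unfolding Ms_def by simp
  have MsS: "Ms (Suc l) = Max (stE (Ms l))" for l unfolding Ms_def by simp
  define El where "El l = stE (Ms l)" for l
  define al where "al l = stb (Ms l)" for l
  have ElS: "El l \<in> S z" for l using st unfolding El_def by blast
  have Elg: "good_avg (El l) (al l)" for l using st unfolding El_def al_def by blast
  have Elf: "finite (El l)" "El l \<noteq> {}" "\<forall>i\<in>El l. 0 \<le> al l i" "sum (al l) (El l) = 1" for l
    using Elg[of l] unfolding good_avg_def by auto
  have Elgt: "El l \<subseteq> {Ms l<..}" for l using st unfolding El_def by blast
  have Elm: "\<forall>q\<in>GM (Ms l). \<forall>A\<in>fst q. A \<subseteq> El l \<longrightarrow> sum (al l) A < \<epsilon>/2" for l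
    using st unfolding El_def al_def by blast
  have MaxEl: "Max (El l) = Ms (Suc l)" for l unfolding MsS El_def by simp
  have Ms_lt: "Ms l < Ms (Suc l)" for l
  proof -
    have "Max (El l) \<in> El l" using Elf[of l] by simp
    then show ?thesis using Elgt[of l] MaxEl[of l] by auto
  qed
  have Ms_mono: "l \<le> l' \<Longrightarrow> Ms l \<le> Ms l'" for l l'
    using lift_Suc_mono_le[of Ms] Ms_lt by (meson less_imp_le)
  have Ms_smono: "l < l' \<Longrightarrow> Ms l < Ms l'" for l l'
    using lift_Suc_mono_less[of Ms] Ms_lt by blast
  have El_rng: "Ms l < x \<and> x \<le> Ms (Suc l)" if "x \<in> El l" for x l
  proof -
    have "x \<le> Max (El l)" using Elf(1)[of l] that by simp
    then show ?thesis using that Elgt[of l] MaxEl[of l] by auto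
  qed
  define Eall where "Eall = \<Union> (El ` {..<p})"
  define w where "w i = (\<Sum>l<p. if i \<in> El l then al l i / real p else 0)" for i
  have finE: "finite Eall" unfolding Eall_def using Elf(1) by simp
  have sumw: "sum w A = (\<Sum>l<p. sum (al l) (A \<inter> El l) / real p)" if "finite A" for A
    unfolding w_def using sum_split_blocks[OF that] .
  have Eall_El: "Eall \<inter> El l = El l" if "l < p" for l unfolding Eall_def using that by blast
  have ga: "good_avg Eall w"
  proof -
    have "0 \<in> {..<p}" using p1 by simp
    then have "El 0 \<subseteq> Eall" unfolding Eall_def by blast
    then have ne: "Eall \<noteq> {}" using Elf(2)[of 0] by blast
    have nn: "\<forall>i\<in>Eall. 0 \<le> w i"
      unfolding w_def using Elf(3) by (auto intro!: sum_nonneg)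
    have "sum w Eall = (\<Sum>l<p. sum (al l) (Eall \<inter> El l) / real p)" using sumw[OF finE] .
    also have "\<dots> = (\<Sum>l<p. 1 / real p)" using Eall_El Elf(4) by (intro sum.cong) auto
    also have "\<dots> = 1" using p1 by simp
    finally show ?thesis unfolding good_avg_def using finE ne nn by blast
  qed
  have Em: "Eall \<subseteq> {m<..}"
  proof
    fix x assume "x \<in> Eall"
    then obtain l where "x \<in> El l" unfolding Eall_def by blast
    then have "Ms l < x" using El_rng by blast
    moreover have "m \<le> Ms l" using Ms_mono[of 0 l] Ms0 by simp
    ultimately show "x \<in> {m<..}" by simp
  qed
  have MinEl: "Ms l < Min (El l)" for l using Elf(1,2)[of l] Min_in El_rng by blast
  have Min_mono: "Min (El i) < Min (El j)" if "i < j" for i j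
  proof -
    have "Min (El i) \<le> Max (El i)" using Elf(1,2)[of i] by simp
    also have "\<dots> = Ms (Suc i)" using MaxEl .
    also have "\<dots> \<le> Ms j" using Ms_mono that by simp
    also have "\<dots> < Min (El j)" using MinEl .
    finally show ?thesis .
  qed
  have Efp: "Eall \<in> fam_prod schreier1 (S z)"
  proof (rule fam_prodI[where Ef=El and k=p])
    show "Eall = \<Union> (El ` {..<p})" unfolding Eall_def ..
    show "\<forall>i<p. El i \<noteq> {} \<and> El i \<in> S z" using Elf(2) ElS by blast
    show "\<forall>i j. i < j \<and> j < p \<longrightarrow> Max (El i) < Min (El j)"
    proof (intro allI impI)
      fix i j assume "i < j \<and> j < p"
      then have "Ms (Suc i) \<le> Ms j" using Ms_mono by simp
      then show "Max (El i) < Min (El j)" using MaxEl MinEl[of j] by simp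
    qed
    define Mins where "Mins = (\<lambda>i. Min (El i)) ` {..<p}"
    have inj: "inj_on (\<lambda>i. Min (El i)) {..<p}"
      unfolding inj_on_def using Min_mono by (metis linorder_neq_iff less_irrefl)
    have cM: "card Mins = p" unfolding Mins_def using card_image[OF inj] by simp
    have "0 \<in> {..<p}" using p1 by simp
    then have neM: "Mins \<noteq> {}" unfolding Mins_def by blast
    have fM: "finite Mins" unfolding Mins_def by simp
    have "Min Mins \<in> Mins" using fM neM by simp
    then obtain i where "Min Mins = Min (El i)" unfolding Mins_def by blast
    then have "Min Mins > Ms i" using MinEl by simp
    moreover have "Ms i \<ge> p" using Ms_mono[of 0 i] Ms0 by simp
    ultimately have cle: "card Mins \<le> Min Mins" using cM by simp
    have sub1: "Mins \<subseteq> {1..}"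
    proof
      fix x assume "x \<in> Mins"
      then obtain i where "x = Min (El i)" unfolding Mins_def by blast
      then show "x \<in> {1..}" using MinEl[of i] by simp
    qed
    show "(\<lambda>i. Min (El i)) ` {..<p} \<in> schreier1"
      unfolding schreier1_def Mins_def[symmetric] using fM sub1 neM cle by blast
  qed
  have mass: "sum w A < \<epsilon>" if q: "q \<in> \<G>" and A: "A \<in> fst q" and AE: "A \<subseteq> Eall" for q A
  proof -
    define G where "G = fst q"
    define \<rho> where "\<rho> = snd q"
    have her: "hereditary G" and rk: "ranked s G \<rho>" using hr q unfolding G_def \<rho>_def by auto
    have AG: "A \<in> G" using A unfolding G_def .
    have finA: "finite A" using AE finE finite_subset by blast
    define P where "P l = A \<inter> {..Ms l}" for l
    have PG: "P l \<in> G" for l using hereditaryD[OF her AG] unfolding P_def by blast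
    have Pmono: "P l \<subseteq> P (Suc l)" for l unfolding P_def using Ms_lt[of l] by auto
    have inA: "\<exists>l<p. x \<in> El l" if "x \<in> A" for x using AE that unfolding Eall_def by blast
    have P0: "P 0 = {}"
    proof -
      have "x \<notin> P 0" for x
      proof
        assume "x \<in> P 0"
        then have x: "x \<in> A" "x \<le> Ms 0" unfolding P_def by auto
        obtain l where "x \<in> El l" using inA[OF x(1)] by blast
        then have "Ms l < x" using El_rng by blast
        then show False using x(2) Ms_mono[of 0 l] by simp
      qed
      then show ?thesis by blast
    qed
    have Pstep: "P (Suc l) = P l \<union> (A \<inter> El l)" if "l < p" for l
    proof (rule set_eqI, rule iffI)
      fix x assume x: "x \<in> P (Suc l)"
      show "x \<in> P l \<union> (A \<inter> El l)"
      proof (cases "x \<le> Ms l")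
        case True then show ?thesis using x unfolding P_def by auto
      next
        case False
        have xA: "x \<in> A" "x \<le> Ms (Suc l)" using x unfolding P_def by auto
        obtain l' where l': "l' < p" "x \<in> El l'" using inA[OF xA(1)] by blast
        have r: "Ms l' < x" "x \<le> Ms (Suc l')" using El_rng[OF l'(2)] by auto
        have "l' = l"
        proof (rule ccontr)
          assume "l' \<noteq> l"
          then consider "l' < l" | "l < l'" by linarith
          then show False
          proof cases
            case 1 then have "Ms (Suc l') \<le> Ms l" using Ms_mono by simp
            then show False using r False by simp
          next
            case 2 then have "Ms (Suc l) \<le> Ms l'" using Ms_mono by simp
            then show False using r xA by simp
          qed
        qed
        then show ?thesis using l' xA by blast
      qed
    next
      fix x assume x: "x \<in> P l \<union> (A \<inter> El l)"
      then show "x \<in> P (Suc l)"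
      proof
        assume "x \<in> P l" then show ?thesis using Pmono by blast
      next
        assume "x \<in> A \<inter> El l" then show ?thesis using El_rng unfolding P_def by auto
      qed
    qed
    have Pdisj: "(A \<inter> El l) \<inter> P l = {}" for l using El_rng unfolding P_def by fastforce
    have Psub: "P l \<in> Pow {..Ms l}" for l unfolding P_def by auto
    define t where "t l = \<rho> (P l) a" for l
    have tmono: "\<forall>l. t (Suc l) \<le> t l"
      unfolding t_def using top_le_sub[OF rk PG PG Pmono amax aF] by blast
    have cnt: "card {l. l < p \<and> t (Suc l) < t l} \<le> C0"
    proof -
      have "card {l. l < p \<and> t (Suc l) < t l} + t p \<le> t 0" using count_drops[OF tmono] .
      moreover have "t 0 = snd q {} a" unfolding t_def \<rho>_def P0 ..
      ultimately show ?thesis using C0b[OF q] by linarith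
    qed
    define v where "v l = sum (al l) (A \<inter> El l)" for l
    have vb: "v l \<le> \<epsilon>/2 + (if t (Suc l) < t l then 1 else 0)" if lp: "l < p" for l
    proof (cases "t (Suc l) < t l")
      case True
      have "v l \<le> sum (al l) (El l)" unfolding v_def
        using Elf(1,3)[of l] by (intro sum_mono2) auto
      then show ?thesis using True Elf(4)[of l] eps by simp
    next
      case False
      then have teq: "t (Suc l) = t l" using tmono by (meson le_neq_implies_less)
      have "A \<inter> El l \<in> Hf G \<rho> a (P l)"
        unfolding Hf_def using Pdisj[of l] PG[of "Suc l"] teq Pstep[OF lp] unfolding t_def by auto
      moreover have "(Hf G \<rho> a (P l), Rf \<rho> a (P l)) \<in> GM (Ms l)"
        unfolding GM_def G_def \<rho>_def using q Psub[of l] by force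
      ultimately have "v l < \<epsilon>/2" unfolding v_def using Elm[of l] by fastforce
      then show ?thesis using False by simp
    qed
    have "sum w A = (\<Sum>l<p. v l / real p)" unfolding v_def using sumw[OF finA] .
    also have "\<dots> = (\<Sum>l<p. v l) / real p" by (simp add: sum_divide_distrib)
    also have "\<dots> \<le> (\<Sum>l<p. \<epsilon>/2 + (if t (Suc l) < t l then 1 else 0)) / real p"
      using p1 vb by (intro divide_right_mono sum_mono) auto
    also have "(\<Sum>l<p. \<epsilon>/2 + (if t (Suc l) < t l then (1::real) else 0))
        = real p * (\<epsilon>/2) + real (card {l. l < p \<and> t (Suc l) < t l})"
      by (simp add: sum.distrib sum_indicator_card)
    also have "(real p * (\<epsilon>/2) + real (card {l. l < p \<and> t (Suc l) < t l})) / real p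
        = \<epsilon>/2 + real (card {l. l < p \<and> t (Suc l) < t l}) / real p"
      using p1 by (simp add: field_simps)
    also have "\<dots> \<le> \<epsilon>/2 + real C0 / real p"
      using cnt p1 by (simp add: divide_right_mono)
    also have "\<dots> < \<epsilon>" using pC by linarith
    finally show ?thesis .
  qed
  show ?thesis using Efp ga Em mass by blast
qed


lemma leq_empty: "s <=oo r \<Longrightarrow> Field r = {} \<Longrightarrow> Field s = {}"
proof -
  assume "s <=oo r" "Field r = {}"
  then obtain f where "embed s r f" unfolding ordLeq_def by blast
  then have "f ` Field s \<subseteq> Field r" by (rule embed_Field)
  then show "Field s = {}" using \<open>Field r = {}\<close> by blast
qed

lemma K_zero:
  assumes "is_zero_ord r" "S r = schreier0"
  shows "Kprop S r"
proof (rule KpropI)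
  fix s :: "nat rel" and \<G> :: "(nat set set \<times> (nat set \<Rightarrow> nat \<Rightarrow> nat)) set" and m :: nat and \<epsilon> :: real
  assume sr: "s <=oo r" and fin: "finite \<G>" and eps: "\<epsilon> > 0"
    and hr: "\<forall>p\<in>\<G>. hereditary (fst p) \<and> ranked s (fst p) (snd p)"
  have Fs: "Field s = {}" using leq_empty[OF sr] assms(1) unfolding is_zero_ord_def by blast
  have noopl: "\<not> opl s f g" for f g unfolding opl_def Fs by blast
  have emp: "A = {}" if q: "q \<in> \<G>" and A: "A \<in> fst q" for q A
  proof (rule ccontr)
    assume ne: "A \<noteq> {}"
    have h: "hereditary (fst q)" "ranked s (fst q) (snd q)" using hr q by auto
    have e: "{} \<in> fst q" using hereditaryD[OF h(1) A, of "{}"] by simp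
    have "{} \<subset> A" using ne by blast
    then have "opl s (snd q A) (snd q {})" using rankedD[OF h(2) e A] by blast
    then show False using noopl by blast
  qed
  let ?E = "{Suc m}"
  let ?a = "\<lambda>i::nat. (1::real)"
  have "?E \<in> S r" unfolding assms(2) schreier0_def by (rule UnI2) auto
  moreover have "good_avg ?E ?a" unfolding good_avg_def by simp
  moreover have "?E \<subseteq> {m<..}" by simp
  moreover have "\<forall>p\<in>\<G>. \<forall>A\<in>fst p. A \<subseteq> ?E \<longrightarrow> sum ?a A < \<epsilon>"
  proof (intro ballI impI)
    fix p A assume "p \<in> \<G>" "A \<in> fst p"
    then have "A = {}" using emp by blast
    then show "sum ?a A < \<epsilon>" using eps by simp
  qed
  ultimately show "\<exists>E a. E \<in> S r \<and> good_avg E a \<and> E \<subseteq> {m<..} \<and> (\<forall>p\<in>\<G>. \<forall>A\<in>fst p. A \<subseteq> E \<longrightarrow> sum a A < \<epsilon>)"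
    by blast
qed

lemma K_succ:
  assumes z: "is_succ_of z r" and Sr: "S r = fam_prod schreier1 (S z)" and Kz: "Kprop S z"
  shows "Kprop S r"
proof (rule KpropI)
  fix s :: "nat rel" and \<G> :: "(nat set set \<times> (nat set \<Rightarrow> nat \<Rightarrow> nat)) set" and m :: nat and \<epsilon> :: real
  assume sr: "s <=oo r" and fin: "finite \<G>" and eps: "\<epsilon> > 0"
    and hr: "\<forall>p\<in>\<G>. hereditary (fst p) \<and> ranked s (fst p) (snd p)"
  have ws: "Well_order s" using sr unfolding ordLeq_def by blast
  have wz: "Well_order z" using succ_wo1[OF z] .
  have wr: "Well_order r" using succ_wo2[OF z] .
  show "\<exists>E a. E \<in> S r \<and> good_avg E a \<and> E \<subseteq> {m<..} \<and> (\<forall>p\<in>\<G>. \<forall>A\<in>fst p. A \<subseteq> E \<longrightarrow> sum a A < \<epsilon>)"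
  proof (cases "s <oo r")
    case True
    have "\<not> z <oo s" using succ_btw[OF z _ True] by blast
    then have sz: "s <=oo z" using ordLess_or_ordLeq[OF wz ws] by blast
    obtain E a where E: "E \<in> S z" "good_avg E a" "E \<subseteq> {m<..}"
      "\<forall>p\<in>\<G>. \<forall>A\<in>fst p. A \<subseteq> E \<longrightarrow> sum a A < \<epsilon>"
      using KpropD[OF Kz sz fin eps hr] by blast
    have "E \<subseteq> {1..}" using E(3) by auto
    then have "E \<in> S r" unfolding Sr using succ_incl[OF E(1)] E(2) unfolding good_avg_def by blast
    then show ?thesis using E by blast
  next
    case False
    then have sri: "s =oo r" using sr ordLeq_iff_ordLess_or_ordIso by blast
    have zs: "z <oo s" using ordLess_ordIso_trans[OF succ_lt[OF z] ordIso_symmetric[OF sri]] .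
    obtain b where b: "b \<in> Field s" "z =oo Restr s (underS s b)" using ordLess_seg[OF zs] by blast
    have bmax: "\<forall>x\<in>Field s. (x,b) \<in> s"
    proof
      fix x assume x: "x \<in> Field s"
      show "(x,b) \<in> s"
      proof (rule ccontr)
        assume nx: "(x,b) \<notin> s"
        then have "(b,x) \<in> s" "b \<noteq> x" using wo_total[OF ws x b(1)] wo_refl[OF ws b(1)] by auto
        then have bu: "b \<in> underS s x" unfolding underS_def by blast
        have 1: "Restr s (underS s b) <oo Restr s (underS s x)" using seg_less[OF ws bu] .
        have 2: "Restr s (underS s x) <oo r"
          using ordLess_ordIso_trans[OF seg_less_top[OF ws x] sri] .
        have 3: "z <oo Restr s (underS s x)" using ordIso_ordLess_trans[OF b(2) 1] .
        show False using succ_btw[OF z 3 2] .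
      qed
    qed
    have s0z: "Restr s (underS s b) <=oo z" using ordIso_imp_ordLeq[OF ordIso_symmetric[OF b(2)]] .
    show ?thesis using succ_main[OF ws b(1) bmax Kz s0z fin eps hr, of m] unfolding Sr[symmetric] .
  qed
qed

lemma supp_down:
  assumes ws: "Well_order s" and op: "opl s f g" and gb: "\<forall>x. g x \<noteq> 0 \<longrightarrow> (x,a) \<in> s"
  shows "\<forall>x. f x \<noteq> 0 \<longrightarrow> (x,a) \<in> s"
proof (intro allI impI)
  fix x assume fx: "f x \<noteq> 0"
  have fs: "fsupp s f" using oplD[OF op] by blast
  have "\<forall>y. y \<notin> Field s \<longrightarrow> f y = 0" using fs unfolding fsupp_def by (elim conjE)
  then have xF: "x \<in> Field s" using fx by auto
  obtain c where c: "c \<in> Field s" "f c < g c" "\<forall>d\<in>Field s. (c,d) \<in> s \<and> c \<noteq> d \<longrightarrow> f d = g d"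
    using oplD[OF op] by blast
  have ca: "(c,a) \<in> s" using gb c(2) by simp
  then have aF: "a \<in> Field s" unfolding Field_def by blast
  show "(x,a) \<in> s"
  proof (rule ccontr)
    assume nxa: "(x,a) \<notin> s"
    then have ax: "(a,x) \<in> s" using wo_total[OF ws xF aF] by blast
    have cx: "(c,x) \<in> s" using wo_trans[OF ws ca ax] .
    have "c \<noteq> x" using nxa ca by blast
    then have "f x = g x" using c(3) xF cx by blast
    then show False using gb fx nxa by simp
  qed
qed

lemma opl_restrict:
  assumes ws: "Well_order s" and op: "opl s f g"
    and fb: "\<forall>x. f x \<noteq> 0 \<longrightarrow> x \<in> underS s b" and gb: "\<forall>x. g x \<noteq> 0 \<longrightarrow> x \<in> underS s b"
  shows "opl (Restr s (underS s b)) f g"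
proof -
  have FS: "Field (Restr s (underS s b)) = underS s b" using field_seg[OF ws] .
  have fs: "fsupp (Restr s (underS s b)) f" "fsupp (Restr s (underS s b)) g"
    using oplD[OF op] fb gb unfolding fsupp_def FS by auto
  obtain c where c: "c \<in> Field s" "f c < g c" "\<forall>d\<in>Field s. (c,d) \<in> s \<and> c \<noteq> d \<longrightarrow> f d = g d"
    using oplD[OF op] by blast
  have cb: "c \<in> underS s b" using gb c(2) by simp
  have "\<forall>d\<in>Field (Restr s (underS s b)). (c,d) \<in> Restr s (underS s b) \<and> c \<noteq> d \<longrightarrow> f d = g d"
  proof (intro ballI impI)
    fix d assume d: "d \<in> Field (Restr s (underS s b))" "(c,d) \<in> Restr s (underS s b) \<and> c \<noteq> d"
    have "d \<in> Field s" using d(1) FS underS_sub_Field[of s b] by blast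
    then show "f d = g d" using c(3) d(2) by blast
  qed
  then show ?thesis unfolding opl_def using fs c(2) cb FS by blast
qed

lemma fin_bound:
  assumes ws: "Well_order s" and ne: "Field s \<noteq> {}" and fin: "finite X" and sub: "X \<subseteq> Field s"
  shows "\<exists>a\<in>Field s. \<forall>x\<in>X. (x,a) \<in> s"
  using fin sub
proof (induction X rule: finite_induct)
  case empty then show ?case using ne by blast
next
  case (insert x X)
  then obtain a where a: "a \<in> Field s" "\<forall>y\<in>X. (y,a) \<in> s" by blast
  have xF: "x \<in> Field s" using insert(4) by blast
  show ?case
  proof (cases "(x,a) \<in> s")
    case True then show ?thesis using a by blast
  next
    case False
    then have ax: "(a,x) \<in> s" using wo_total[OF ws xF a(1)] by blast
    have "\<forall>y\<in>insert x X. (y,x) \<in> s"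
      using wo_refl[OF ws xF] a(2) wo_trans[OF ws _ ax] by blast
    then show ?thesis using xF by blast
  qed
qed


lemma sys_zero: assumes "schreier_system S" "is_zero_ord r" shows "S r = schreier0"
proof -
  have "\<forall>r. is_zero_ord r \<longrightarrow> S r = schreier0" using assms(1) unfolding schreier_system_def by (elim conjE)
  then show ?thesis using assms(2) by simp
qed

lemma sys_succ: assumes "schreier_system S" "is_succ_of z r" shows "S r = fam_prod schreier1 (S z)"
proof -
  have "\<forall>z r. is_succ_of z r \<longrightarrow> S r = fam_prod schreier1 (S z)"
    using assms(1) unfolding schreier_system_def by (elim conjE)
  then show ?thesis using assms(2) by simp
qed

lemma sys_lim: assumes "schreier_system S" "is_limit_ord r"
  shows "\<exists>\<xi>s \<sigma>s :: nat \<Rightarrow> nat rel.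
           (\<forall>n\<ge>1. (\<xi>s n, r) \<in> ordLess \<and> is_succ_of (\<xi>s n) (\<sigma>s n)) \<and>
           (\<forall>n\<ge>1. (\<xi>s n, \<xi>s (Suc n)) \<in> ordLess) \<and>
           (\<forall>\<zeta> :: nat rel. (\<zeta>, r) \<in> ordLess \<longrightarrow> (\<exists>n\<ge>1. (\<zeta>, \<xi>s n) \<in> ordLess)) \<and>
           (\<forall>n\<ge>1. S (\<sigma>s n) \<subseteq> S (\<xi>s (Suc n))) \<and>
           S r = {{}} \<union> {E. E \<noteq> {} \<and> E \<in> S (\<sigma>s (Min E))}"
proof -
  have "\<forall>r. is_limit_ord r \<longrightarrow>
        (\<exists>\<xi>s \<sigma>s :: nat \<Rightarrow> nat rel.
           (\<forall>n\<ge>1. (\<xi>s n, r) \<in> ordLess \<and> is_succ_of (\<xi>s n) (\<sigma>s n)) \<and>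
           (\<forall>n\<ge>1. (\<xi>s n, \<xi>s (Suc n)) \<in> ordLess) \<and>
           (\<forall>\<zeta> :: nat rel. (\<zeta>, r) \<in> ordLess \<longrightarrow> (\<exists>n\<ge>1. (\<zeta>, \<xi>s n) \<in> ordLess)) \<and>
           (\<forall>n\<ge>1. S (\<sigma>s n) \<subseteq> S (\<xi>s (Suc n))) \<and>
           S r = {{}} \<union> {E. E \<noteq> {} \<and> E \<in> S (\<sigma>s (Min E))})"
    using assms(1) unfolding schreier_system_def by (elim conjE)
  then show ?thesis using assms(2) by simp
qed

lemma chain:
  assumes sys: "schreier_system S" and succ: "\<forall>n\<ge>1. is_succ_of (\<xi>s n) (\<sigma>s n)"
    and inc: "\<forall>n\<ge>1. S (\<sigma>s n) \<subseteq> S (\<xi>s (Suc n))"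
    and n1: "n \<ge> 1" and E: "E \<in> S (\<xi>s n)" "finite E" "E \<noteq> {}" "E \<subseteq> {1..}"
    and mn: "m \<ge> n"
  shows "E \<in> S (\<sigma>s m)"
  using mn
proof (induction m rule: nat_induct_at_least)
  case base
  have "S (\<sigma>s n) = fam_prod schreier1 (S (\<xi>s n))" using sys_succ[OF sys] succ n1 by simp
  then show ?case using succ_incl[OF E] by simp
next
  case (Suc m)
  have m1: "m \<ge> 1" using Suc.hyps n1 by simp
  have "E \<in> S (\<xi>s (Suc m))" using inc m1 Suc.IH by blast
  moreover have "S (\<sigma>s (Suc m)) = fam_prod schreier1 (S (\<xi>s (Suc m)))" using sys_succ[OF sys] succ by simp
  ultimately show ?case using succ_incl[OF _ E(2-4)] by simp
qed

lemma lim_nomax: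
  fixes s r :: "nat rel"
  assumes ws: "Well_order s" and sri: "s =oo r" and lim: "is_limit_ord r"
    and aF: "a \<in> Field s" and amax: "\<forall>x\<in>Field s. (x,a) \<in> s"
  shows False
proof -
  let ?sa = "Restr s (underS s a)"
  have lt: "?sa <oo s" using seg_less_top[OF ws aF] .
  have nb: "\<not> (?sa <oo w \<and> w <oo s)" for w :: "nat rel"
  proof
    assume h: "?sa <oo w \<and> w <oo s"
    obtain b where b: "b \<in> Field s" "w =oo Restr s (underS s b)" using ordLess_seg h by blast
    have ba: "(b,a) \<in> s" using amax b(1) by blast
    show False
    proof (cases "b = a")
      case True
      then have "?sa <oo ?sa" using ordLess_ordIso_trans[of ?sa w] h b(2) by blast
      then show False using ordLess_irreflexive by blast
    next
      case False
      then have "b \<in> underS s a" using ba unfolding underS_def by blast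
      then have "Restr s (underS s b) <oo ?sa" using seg_less[OF ws] by blast
      then have "w <oo ?sa" using ordIso_ordLess_trans b(2) by blast
      then have "?sa <oo ?sa" using ordLess_transitive h by blast
      then show False using ordLess_irreflexive by blast
    qed
  qed
  have "is_succ_of ?sa s" unfolding is_succ_of_def using Well_order_Restr[OF ws] ws lt nb by blast
  then have "is_succ_of ?sa r" using succ_transfer sri by blast
  then show False using lim unfolding is_limit_ord_def by blast
qed

definition cutf :: "nat rel \<Rightarrow> nat \<Rightarrow> (nat set \<Rightarrow> nat \<Rightarrow> nat) \<Rightarrow> nat set \<Rightarrow> nat \<Rightarrow> nat" where
  "cutf s b \<rho> = (\<lambda>A x. if x \<in> underS s b then \<rho> A x else 0)"

lemma lim_reduce:
  fixes s r :: "nat rel" and \<G> :: "(nat set set \<times> (nat set \<Rightarrow> nat \<Rightarrow> nat)) set"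
  assumes sri: "s =oo r" and lim: "is_limit_ord r" and fin: "finite \<G>"
    and hr: "\<forall>q\<in>\<G>. hereditary (fst q) \<and> ranked s (fst q) (snd q)"
  shows "\<exists>s' (\<G>'::(nat set set \<times> (nat set \<Rightarrow> nat \<Rightarrow> nat)) set). s' <oo r \<and> finite \<G>' \<and>
     (\<forall>q\<in>\<G>'. hereditary (fst q) \<and> ranked s' (fst q) (snd q)) \<and> (\<forall>q\<in>\<G>. \<exists>q'\<in>\<G>'. fst q' = fst q)"
proof -
  have ws: "Well_order s" using sri unfolding ordIso_def by blast
  have Fr: "Field r \<noteq> {}" using lim unfolding is_limit_ord_def by blast
  have Fs: "Field s \<noteq> {}" using Fr field_iso_empty[OF sri] by blast
  define X where "X = \<Union> ((\<lambda>q. {x. snd q {} x \<noteq> 0}) ` {q\<in>\<G>. fsupp s (snd q {})})"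
  have finX: "finite X" unfolding X_def using fin unfolding fsupp_def by auto
  have subX: "X \<subseteq> Field s" unfolding X_def fsupp_def by auto
  obtain a where a: "a \<in> Field s" "\<forall>x\<in>X. (x,a) \<in> s" using fin_bound[OF ws Fs finX subX] by blast
  obtain x where x: "x \<in> Field s" "(x,a) \<notin> s" using lim_nomax[OF ws sri lim a(1)] by blast
  have ax: "(a,x) \<in> s" using wo_total[OF ws x(1) a(1)] x(2) by blast
  have xa: "a \<noteq> x" using wo_refl[OF ws a(1)] x(2) by blast
  define b where "b = x"
  have bF: "b \<in> Field s" and ab: "(a,b) \<in> s" "a \<noteq> b" using x ax xa unfolding b_def by auto
  have undera: "y \<in> underS s b" if "(y,a) \<in> s" for y
  proof -
    have "(y,b) \<in> s" using wo_trans[OF ws that ab(1)] .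
    moreover have "y \<noteq> b" using that ab wo_antisym[OF ws] by blast
    ultimately show ?thesis unfolding underS_def by blast
  qed
  define s' where "s' = Restr s (underS s b)"
  have s'r: "s' <oo r" unfolding s'_def using ordLess_ordIso_trans[OF seg_less_top[OF ws bF] sri] .
  define \<G>' where "\<G>' = (\<lambda>q. (fst q, cutf s b (snd q))) ` \<G>"
  have fin': "finite \<G>'" unfolding \<G>'_def using fin by simp
  have cov: "\<forall>q\<in>\<G>. \<exists>q'\<in>\<G>'. fst q' = fst q" unfolding \<G>'_def by auto
  have rk': "ranked s' G (cutf s b \<rho>)" if q: "(G, \<rho>) \<in> \<G>" for G \<rho>
    unfolding ranked_def
  proof (intro ballI impI)
    fix A B assume A: "A \<in> G" and B: "B \<in> G" and AB: "A \<subset> B"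
    have her: "hereditary G" and rk: "ranked s G \<rho>" using hr q by auto
    have eG: "{} \<in> G" using hereditaryD[OF her A, of "{}"] by simp
    have "{} \<subset> B" using AB by blast
    then have "opl s (\<rho> B) (\<rho> {})" using rankedD[OF rk eG B] by blast
    then have "fsupp s (\<rho> {})" using oplD by blast
    then have "(G, \<rho>) \<in> {q\<in>\<G>. fsupp s (snd q {})}" using q by simp
    then have "{x. \<rho> {} x \<noteq> 0} \<subseteq> X" unfolding X_def by force
    then have b0: "\<forall>x. \<rho> {} x \<noteq> 0 \<longrightarrow> (x,a) \<in> s" using a(2) by blast
    have bC: "\<forall>x. \<rho> C x \<noteq> 0 \<longrightarrow> (x,a) \<in> s" if C: "C \<in> G" for C
    proof (cases "C = {}")
      case True then show ?thesis using b0 by simp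
    next
      case False
      then have "{} \<subset> C" by blast
      then have "opl s (\<rho> C) (\<rho> {})" using rankedD[OF rk eG C] by blast
      then show ?thesis using supp_down[OF ws _ b0] by blast
    qed
    have bU: "\<forall>x. \<rho> C x \<noteq> 0 \<longrightarrow> x \<in> underS s b" if C: "C \<in> G" for C
      using bC[OF C] undera by blast
    have cuteq: "cutf s b \<rho> C = \<rho> C" if C: "C \<in> G" for C
    proof
      fix y show "cutf s b \<rho> C y = \<rho> C y"
        unfolding cutf_def using bU[OF C] by auto
    qed
    have "opl s (\<rho> B) (\<rho> A)" using rankedD[OF rk A B AB] .
    then have "opl s' (\<rho> B) (\<rho> A)" unfolding s'_def using opl_restrict[OF ws _ bU[OF B] bU[OF A]] by blast
    then show "opl s' (cutf s b \<rho> B) (cutf s b \<rho> A)" using cuteq[OF A] cuteq[OF B] by simp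
  qed
  have hr': "\<forall>q\<in>\<G>'. hereditary (fst q) \<and> ranked s' (fst q) (snd q)"
  proof
    fix q' assume "q' \<in> \<G>'"
    then obtain G \<rho> where q: "(G,\<rho>) \<in> \<G>" "q' = (G, cutf s b \<rho>)" unfolding \<G>'_def by auto
    have "hereditary G" using hr q(1) by auto
    then show "hereditary (fst q') \<and> ranked s' (fst q') (snd q')" using rk'[OF q(1)] q(2) by simp
  qed
  show ?thesis using s'r fin' hr' cov by blast
qed

lemma K_lim:
  assumes sys: "schreier_system S" and lim: "is_limit_ord r" and IH: "\<forall>z::nat rel. z <oo r \<longrightarrow> Kprop S z"
  shows "Kprop S r"
proof (rule KpropI)
  fix s :: "nat rel" and \<G> :: "(nat set set \<times> (nat set \<Rightarrow> nat \<Rightarrow> nat)) set" and m :: nat and \<epsilon> :: real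
  assume sr: "s <=oo r" and fin: "finite \<G>" and eps: "\<epsilon> > 0"
    and hr: "\<forall>p\<in>\<G>. hereditary (fst p) \<and> ranked s (fst p) (snd p)"
  obtain \<xi>s \<sigma>s :: "nat \<Rightarrow> nat rel" where
    L1: "\<forall>n\<ge>1. (\<xi>s n, r) \<in> ordLess \<and> is_succ_of (\<xi>s n) (\<sigma>s n)" and
    L3: "\<forall>\<zeta> :: nat rel. (\<zeta>, r) \<in> ordLess \<longrightarrow> (\<exists>n\<ge>1. (\<zeta>, \<xi>s n) \<in> ordLess)" and
    L4: "\<forall>n\<ge>1. S (\<sigma>s n) \<subseteq> S (\<xi>s (Suc n))" and
    L5: "S r = {{}} \<union> {E. E \<noteq> {} \<and> E \<in> S (\<sigma>s (Min E))}"
    using sys_lim[OF sys lim] by (elim exE conjE) (rule that; assumption)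
  have succs: "\<forall>n\<ge>1. is_succ_of (\<xi>s n) (\<sigma>s n)" using L1 by blast
  obtain s' and \<G>' :: "(nat set set \<times> (nat set \<Rightarrow> nat \<Rightarrow> nat)) set" where
    R: "s' <oo r" "finite \<G>'" "\<forall>q\<in>\<G>'. hereditary (fst q) \<and> ranked s' (fst q) (snd q)"
       "\<forall>q\<in>\<G>. \<exists>q'\<in>\<G>'. fst q' = fst q"
  proof (cases "s <oo r")
    case True
    show ?thesis using that[of s \<G>] True fin hr by blast
  next
    case False
    then have sri: "s =oo r" using sr ordLeq_iff_ordLess_or_ordIso by blast
    show ?thesis using lim_reduce[OF sri lim fin hr] that by blast
  qed
  obtain n where n: "n \<ge> 1" "s' <oo \<xi>s n" using L3 R(1) by blast
  have Kn: "Kprop S (\<xi>s n)" using IH L1 n(1) by blast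
  obtain E a where E: "E \<in> S (\<xi>s n)" "good_avg E a" "E \<subseteq> {max m n<..}"
      "\<forall>p\<in>\<G>'. \<forall>A\<in>fst p. A \<subseteq> E \<longrightarrow> sum a A < \<epsilon>"
    using KpropD[OF Kn ordLess_imp_ordLeq[OF n(2)] R(2) eps R(3), of "max m n"] by blast
  have Ef: "finite E" "E \<noteq> {}" using E(2) unfolding good_avg_def by auto
  have E1: "E \<subseteq> {1..}" using E(3) n(1) by auto
  have Emin: "Min E \<ge> n" using Min_in[OF Ef] E(3) by auto
  have "E \<in> S (\<sigma>s (Min E))" using chain[OF sys succs L4 n(1) E(1) Ef E1 Emin] .
  then have ES: "E \<in> S r" unfolding L5 using Ef(2) by blast
  have Em: "E \<subseteq> {m<..}" using E(3) by auto
  have mass: "\<forall>p\<in>\<G>. \<forall>A\<in>fst p. A \<subseteq> E \<longrightarrow> sum a A < \<epsilon>"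
  proof (intro ballI impI)
    fix p A assume p: "p \<in> \<G>" and A: "A \<in> fst p" and AE: "A \<subseteq> E"
    obtain q' where q': "q' \<in> \<G>'" "fst q' = fst p" using R(4) p by blast
    show "sum a A < \<epsilon>" using E(4) q' A AE by auto
  qed
  show "\<exists>E a. E \<in> S r \<and> good_avg E a \<and> E \<subseteq> {m<..} \<and> (\<forall>p\<in>\<G>. \<forall>A\<in>fst p. A \<subseteq> E \<longrightarrow> sum a A < \<epsilon>)"
    using ES E(2) Em mass by blast
qed

lemma K_all:
  assumes sys: "schreier_system S"
  shows "Kprop S r"
proof (induction r rule: wf_induct[OF wf_ordLess])
  case (1 r)
  have IH: "\<forall>z::nat rel. z <oo r \<longrightarrow> Kprop S z" using 1 by blast
  show ?case
  proof (cases "Well_order r")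
    case False
    show ?thesis
    proof (rule KpropI)
      fix s :: "nat rel" and \<G> :: "(nat set set \<times> (nat set \<Rightarrow> nat \<Rightarrow> nat)) set" and m :: nat and \<epsilon> :: real
      assume "s <=oo r"
      then have "Well_order r" unfolding ordLeq_def by blast
      then show "\<exists>E a. E \<in> S r \<and> good_avg E a \<and> E \<subseteq> {m<..} \<and> (\<forall>p\<in>\<G>. \<forall>A\<in>fst p. A \<subseteq> E \<longrightarrow> sum a A < \<epsilon>)"
        using False by blast
    qed
  next
    case wr: True
    show ?thesis
    proof (cases "Field r = {}")
      case True
      then have z: "is_zero_ord r" using wr unfolding is_zero_ord_def by blast
      show ?thesis using K_zero[of r S, OF z sys_zero[OF sys z]] .
    next
      case Fne: False
      show ?thesis
      proof (cases "\<exists>z. is_succ_of z r")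
        case True
        then obtain z where z: "is_succ_of z r" by blast
        have "Kprop S z" using IH succ_lt[OF z] by blast
        then show ?thesis using K_succ[of z r S, OF z sys_succ[OF sys z]] by blast
      next
        case False
        then have "is_limit_ord r" using wr Fne unfolding is_limit_ord_def by blast
        then show ?thesis using K_lim[OF sys _ IH] by blast
      qed
    qed
  qed
qed


lemma cs_sqrt:
  fixes u v :: "nat \<Rightarrow> real"
  assumes "\<forall>i\<in>T. 0 \<le> u i" "\<forall>i\<in>T. 0 \<le> v i"
  shows "(\<Sum>i\<in>T. sqrt (u i) * sqrt (v i)) \<le> sqrt (sum u T) * sqrt (sum v T)"
proof -
  have "(\<Sum>i\<in>T. sqrt (u i) * sqrt (v i))\<^sup>2 \<le> (\<Sum>i\<in>T. (sqrt (u i))\<^sup>2) * (\<Sum>i\<in>T. (sqrt (v i))\<^sup>2)"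
    by (rule Cauchy_Schwarz_ineq_sum)
  also have "(\<Sum>i\<in>T. (sqrt (u i))\<^sup>2) = sum u T" using assms(1) by (intro sum.cong) auto
  also have "(\<Sum>i\<in>T. (sqrt (v i))\<^sup>2) = sum v T" using assms(2) by (intro sum.cong) auto
  finally have "(\<Sum>i\<in>T. sqrt (u i) * sqrt (v i)) \<le> sqrt (sum u T * sum v T)"
    by (rule real_le_rsqrt)
  then show ?thesis by (simp add: real_sqrt_mult)
qed

lemma exists_argmax:
  fixes f :: "nat \<Rightarrow> real"
  assumes "finite S" "S \<noteq> {}"
  shows "\<exists>e\<in>S. \<forall>j\<in>S. f j \<le> f e"
proof -
  have "Max (f ` S) \<in> f ` S" using assms by simp
  then obtain e where e: "e \<in> S" "f e = Max (f ` S)" by auto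
  have "\<forall>j\<in>S. f j \<le> f e" using e(2) assms by simp
  then show ?thesis using e(1) by blast
qed

lemma spreadingD:
  "spreading F \<Longrightarrow> E \<in> F \<Longrightarrow> strict_mono_on E g \<Longrightarrow> (\<forall>m\<in>E. m \<le> g m) \<Longrightarrow> g ` E \<in> F"
  unfolding spreading_def by blast

lemma block_bound:
  fixes F :: "nat set set" and x :: "nat \<Rightarrow> real" and U :: "nat set" and c :: real
  assumes her: "hereditary F" and spr: "spreading F" and sing: "{1} \<in> F"
    and xnn: "\<forall>j. 0 \<le> x j" and finU: "finite U" and xz: "\<forall>j. j \<notin> U \<longrightarrow> x j = 0"
    and tot: "sum x U \<le> 1" and c0: "0 \<le> c" and mass: "\<forall>A\<in>F. A \<subseteq> U \<longrightarrow> sum x A \<le> c"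
  shows "block_norm F x \<le> sqrt c"
  unfolding block_norm_def
proof (rule cSup_least)
  let ?I1 = "\<lambda>i::nat. {1::nat}"
  have "(\<lambda>i. Min (?I1 i)) ` {..<1::nat} = {1}" by auto
  then have "(\<Sum>i<1. ell2_part (?I1 i) x) \<in> {(\<Sum>i<t. ell2_part (I i) x) | (t :: nat) I.
      1 \<le> t \<and> (\<forall>i<t. I i \<noteq> {} \<and> finite (I i) \<and> I i \<subseteq> {1..}) \<and>
      (\<forall>i j. i < j \<and> j < t \<longrightarrow> Max (I i) < Min (I j)) \<and>
      (\<lambda>i. Min (I i)) ` {..<t} \<in> F}"
    using sing by (intro CollectI exI[of _ 1] exI[of _ ?I1]) auto
  then show "{(\<Sum>i<t. ell2_part (I i) x) | (t :: nat) I.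
      1 \<le> t \<and> (\<forall>i<t. I i \<noteq> {} \<and> finite (I i) \<and> I i \<subseteq> {1..}) \<and>
      (\<forall>i j. i < j \<and> j < t \<longrightarrow> Max (I i) < Min (I j)) \<and>
      (\<lambda>i. Min (I i)) ` {..<t} \<in> F} \<noteq> {}" by blast
next
  fix v assume "v \<in> {(\<Sum>i<t. ell2_part (I i) x) | (t :: nat) I.
      1 \<le> t \<and> (\<forall>i<t. I i \<noteq> {} \<and> finite (I i) \<and> I i \<subseteq> {1..}) \<and>
      (\<forall>i j. i < j \<and> j < t \<longrightarrow> Max (I i) < Min (I j)) \<and>
      (\<lambda>i. Min (I i)) ` {..<t} \<in> F}"
  then obtain t :: nat and I :: "nat \<Rightarrow> nat set" where v: "v = (\<Sum>i<t. ell2_part (I i) x)"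
    and It: "\<forall>i<t. I i \<noteq> {} \<and> finite (I i) \<and> I i \<subseteq> {1..}"
    and Io: "\<forall>i j. i < j \<and> j < t \<longrightarrow> Max (I i) < Min (I j)"
    and IF: "(\<lambda>i. Min (I i)) ` {..<t} \<in> F" by blast
  have Ifin: "finite (I i)" "I i \<noteq> {}" if "i < t" for i using It that by auto
  have Minlt: "Min (I i) < Min (I j)" if "i < j" "j < t" for i j
  proof -
    have "Min (I i) \<le> Max (I i)" using Ifin[of i] that by simp
    then show ?thesis using Io that by fastforce
  qed
  have disj: "I i \<inter> I j = {}" if "i < j" "j < t" for i j
  proof -
    have "y \<le> Max (I i)" if "y \<in> I i" for y using Ifin[of i] \<open>i < j\<close> \<open>j < t\<close> that by simp
    moreover have "Min (I j) \<le> y" if "y \<in> I j" for y using Ifin[of j] \<open>j < t\<close> that by simp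
    ultimately show ?thesis using Io that by fastforce
  qed
  define T where "T = {i. i < t \<and> I i \<inter> U \<noteq> {}}"
  have finT: "finite T" unfolding T_def by simp
  have Tt: "T \<subseteq> {..<t}" unfolding T_def by auto
  define e where "e i = (SOME y. y \<in> I i \<inter> U \<and> (\<forall>j\<in>I i \<inter> U. x j \<le> x y))" for i
  have eprop: "e i \<in> I i \<inter> U \<and> (\<forall>j\<in>I i \<inter> U. x j \<le> x (e i))" if "i \<in> T" for i
  proof -
    have "finite (I i \<inter> U)" "I i \<inter> U \<noteq> {}" using that finU unfolding T_def by auto
    then have "\<exists>y. y \<in> I i \<inter> U \<and> (\<forall>j\<in>I i \<inter> U. x j \<le> x y)" using exists_argmax by blast
    then show ?thesis unfolding e_def by (rule someI_ex)
  qed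
  define W where "W i = sum x (I i \<inter> U)" for i
  have ell0: "ell2_part (I i) x = 0" if "i < t" "i \<notin> T" for i
  proof -
    have "\<forall>j\<in>I i. x j = 0" using that xz unfolding T_def by auto
    then show ?thesis unfolding ell2_part_def by simp
  qed
  have ellT: "ell2_part (I i) x \<le> sqrt (x (e i)) * sqrt (W i)" if iT: "i \<in> T" for i
  proof -
    have it: "i < t" using iT unfolding T_def by simp
    have "(\<Sum>j\<in>I i. (x j)\<^sup>2) = (\<Sum>j\<in>I i \<inter> U. (x j)\<^sup>2)"
      using Ifin[OF it] xz by (intro sum.mono_neutral_right) auto
    also have "\<dots> \<le> (\<Sum>j\<in>I i \<inter> U. x (e i) * x j)"
    proof (rule sum_mono)
      fix j assume j: "j \<in> I i \<inter> U"
      have "x j \<le> x (e i)" using eprop[OF iT] j by blast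
      then show "(x j)\<^sup>2 \<le> x (e i) * x j" using xnn by (simp add: power2_eq_square mult_right_mono)
    qed
    also have "\<dots> = x (e i) * W i" unfolding W_def by (simp add: sum_distrib_left)
    finally have "sqrt (\<Sum>j\<in>I i. (x j)\<^sup>2) \<le> sqrt (x (e i) * W i)" by simp
    then show ?thesis unfolding ell2_part_def by (simp add: real_sqrt_mult)
  qed
  have "v = (\<Sum>i\<in>T. ell2_part (I i) x)"
    unfolding v using Tt ell0 by (intro sum.mono_neutral_right) auto
  also have "\<dots> \<le> (\<Sum>i\<in>T. sqrt (x (e i)) * sqrt (W i))" using ellT by (rule sum_mono)
  also have "\<dots> \<le> sqrt (\<Sum>i\<in>T. x (e i)) * sqrt (sum W T)"
    using cs_sqrt[of T "\<lambda>i. x (e i)" W] xnn unfolding W_def by (simp add: sum_nonneg)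
  also have "\<dots> \<le> sqrt c * sqrt 1"
  proof (rule mult_mono)
    have inj_e: "inj_on e T"
    proof (rule inj_onI)
      fix i j assume i: "i \<in> T" and j: "j \<in> T" and eq: "e i = e j"
      have "e i \<in> I i" "e j \<in> I j" using eprop i j by auto
      show "i = j"
      proof (rule ccontr)
        assume "i \<noteq> j"
        then consider "i < j" | "j < i" by linarith
        then show False
        proof cases
          case 1
          have "j < t" using j unfolding T_def by simp
          then have "I i \<inter> I j = {}" using disj 1 by blast
          then show False using \<open>e i \<in> I i\<close> \<open>e j \<in> I j\<close> eq by auto
        next
          case 2
          have "i < t" using i unfolding T_def by simp
          then have "I j \<inter> I i = {}" using disj 2 by blast
          then show False using \<open>e i \<in> I i\<close> \<open>e j \<in> I j\<close> eq by auto
        qed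
      qed
    qed
    have sum_e: "(\<Sum>i\<in>T. x (e i)) = sum x (e ` T)" using sum.reindex[OF inj_e, of x] by simp
    define mn where "mn i = Min (I i)" for i
    have inj_mn: "inj_on mn T"
    proof (rule inj_onI)
      fix i j assume i: "i \<in> T" and j: "j \<in> T" and eq: "mn i = mn j"
      show "i = j"
      proof (rule ccontr)
        assume "i \<noteq> j"
        then consider "i < j" | "j < i" by linarith
        then show False
        proof cases
          case 1
          have "j < t" using j unfolding T_def by simp
          then show False using Minlt[OF 1] eq unfolding mn_def by simp
        next
          case 2
          have "i < t" using i unfolding T_def by simp
          then show False using Minlt[OF 2] eq unfolding mn_def by simp
        qed
      qed
    qed
    have M'F: "mn ` T \<in> F" using hereditaryD[OF her IF, of "mn ` T"] Tt unfolding mn_def by blast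
    define g where "g = e \<circ> inv_into T mn"
    have gimg: "g ` (mn ` T) = e ` T" unfolding g_def image_comp[symmetric]
      using inv_into_image_cancel[OF inj_mn] by simp
    have gmn: "g (mn i) = e i" if "i \<in> T" for i unfolding g_def using inv_into_f_f[OF inj_mn that] by simp
    have smono: "strict_mono_on (mn ` T) g"
    proof (rule strict_mono_onI)
      fix m1 m2 assume m1: "m1 \<in> mn ` T" and m2: "m2 \<in> mn ` T" and lt: "m1 < m2"
      obtain i1 where i1: "i1 \<in> T" "m1 = mn i1" using m1 by blast
      obtain i2 where i2: "i2 \<in> T" "m2 = mn i2" using m2 by blast
      have t1: "i1 < t" "i2 < t" using i1 i2 unfolding T_def by auto
      have "i1 < i2"
      proof (rule ccontr)
        assume "\<not> i1 < i2"
        then consider "i1 = i2" | "i2 < i1" by linarith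
        then show False
        proof cases
          case 1 then show False using lt i1 i2 by simp
        next
          case 2 then show False using lt i1(2) i2(2) Minlt[OF 2 t1(1)] unfolding mn_def by simp
        qed
      qed
      have "e i1 \<le> Max (I i1)" using eprop[OF i1(1)] Ifin[OF t1(1)] by simp
      also have "\<dots> < Min (I i2)" using Io \<open>i1 < i2\<close> t1 by blast
      also have "\<dots> \<le> e i2" using eprop[OF i2(1)] Ifin[OF t1(2)] by simp
      finally show "g m1 < g m2" using gmn i1 i2 by simp
    qed
    have gge: "\<forall>m\<in>mn ` T. m \<le> g m"
    proof
      fix m assume "m \<in> mn ` T"
      then obtain i where i: "i \<in> T" "m = mn i" by blast
      have "i < t" using i unfolding T_def by simp
      then have "mn i \<le> e i" using eprop[OF i(1)] Ifin unfolding mn_def by simp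
      then show "m \<le> g m" using gmn i by simp
    qed
    have "e ` T \<in> F" using spreadingD[OF spr M'F smono gge] gimg by simp
    moreover have "e ` T \<subseteq> U" using eprop by blast
    ultimately have "sum x (e ` T) \<le> c" using mass by blast
    then show "sqrt (\<Sum>i\<in>T. x (e i)) \<le> sqrt c" using sum_e by simp
    have "sum W T = sum x (\<Union>i\<in>T. I i \<inter> U)"
      unfolding W_def
    proof (rule sum.UNION_disjoint[symmetric])
      show "finite T" using finT .
      show "\<forall>i\<in>T. finite (I i \<inter> U)" using finU by blast
      show "\<forall>i\<in>T. \<forall>j\<in>T. i \<noteq> j \<longrightarrow> (I i \<inter> U) \<inter> (I j \<inter> U) = {}"
      proof (intro ballI impI)
        fix i j assume i: "i \<in> T" and j: "j \<in> T" and ne: "i \<noteq> j"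
        have t1: "i < t" "j < t" using i j unfolding T_def by auto
        from ne consider "i < j" | "j < i" by linarith
        then show "(I i \<inter> U) \<inter> (I j \<inter> U) = {}"
        proof cases
          case 1 then have "I i \<inter> I j = {}" using disj t1 by blast
          then show ?thesis by auto
        next
          case 2 then have "I j \<inter> I i = {}" using disj t1 by blast
          then show ?thesis by auto
        qed
      qed
    qed
    also have "\<dots> \<le> sum x U" using finU xnn by (intro sum_mono2) auto
    finally have "sum W T \<le> 1" using tot by simp
    then show "sqrt (sum W T) \<le> sqrt 1" by simp
    show "0 \<le> sqrt c" using c0 by simp
    show "0 \<le> sqrt (sum W T)" unfolding W_def using xnn by (simp add: sum_nonneg)
  qed
  also have "\<dots> = sqrt c" by simp
  finally show "v \<le> sqrt c" .
qed


lemma omega_pow_opl: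
  assumes "(f, g) \<in> omega_pow \<eta>" "f \<noteq> g"
  shows "opl \<eta> f g"
  using assms unfolding omega_pow_def opl_def fsupp_def by auto

lemma ranks_exist:
  fixes \<eta> :: "nat rel" and Fn :: "nat set set"
  assumes cb: "CB_less Fn (omega_pow \<eta>)"
  shows "\<exists>\<rho>. \<forall>E\<in>Fn. \<forall>E'\<in>Fn. E \<subset> E' \<longrightarrow> opl \<eta> (\<rho> E') (\<rho> E)"
proof -
  have "derivs Fn (Dcons Fn)" by (rule Dcons_derivs)
  then obtain \<xi> :: "nat rel" where \<xi>: "\<xi> <oo omega_pow \<eta>" "Dcons Fn \<xi> = {}"
    using cb unfolding CB_less_def by blast
  obtain \<rho> where \<rho>: "\<forall>E\<in>Fn. \<forall>E'\<in>Fn. E \<subset> E' \<longrightarrow> (\<rho> E', \<rho> E) \<in> omega_pow \<eta> \<and> \<rho> E' \<noteq> \<rho> E"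
    using rank_exists[OF Dcons_derivs \<xi>] by blast
  show ?thesis using \<rho> omega_pow_opl by blast
qed

lemma unit_sum_val:
  fixes k :: "nat \<Rightarrow> nat" and a :: "nat \<Rightarrow> real"
  assumes inj: "inj_on k E" and i: "i \<in> E" and fin: "finite E"
  shows "(\<Sum>i'\<in>E. a i' * unit_vec (k i') (k i)) = a i"
proof -
  have "(\<Sum>i'\<in>E. a i' * unit_vec (k i') (k i)) = (\<Sum>i'\<in>E. if i' = i then a i' else 0)"
  proof (rule sum.cong[OF refl])
    fix i' assume i': "i' \<in> E"
    have "k i = k i' \<longleftrightarrow> i' = i" using inj i i' unfolding inj_on_def by blast
    then show "a i' * unit_vec (k i') (k i) = (if i' = i then a i' else 0)" unfolding unit_vec_def by simp
  qed
  also have "\<dots> = a i" using i fin by simp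
  finally show ?thesis .
qed

theorem lemma3p1:
  fixes \<eta> :: "nat rel" and F :: "nat \<Rightarrow> nat set set" and \<omega> :: "nat \<Rightarrow> real"
    and S :: "nat rel \<Rightarrow> nat set set"
  assumes "Well_order \<eta>" and "Field \<eta> \<noteq> {}"
    and "\<forall>n\<ge>1. regular (F n) \<and> contains_singletons (F n) \<and> CB_less (F n) (omega_pow \<eta>)"
    and "\<forall>n\<ge>1. 0 < \<omega> n \<and> \<omega> n \<le> 1"
    and "\<omega> \<longlonglongrightarrow> 0"
    and "schreier_system S"
  shows "weakly_null_wrt (S \<eta>) (bracket_norm F \<omega>) unit_vec"
proof -
  note w\<eta> = assms(1) and Fprops = assms(3) and \<omega>b = assms(4) and \<omega>0 = assms(5) and sys = assms(6)
  have "\<forall>n. \<exists>\<rho>. n \<ge> 1 \<longrightarrow> (\<forall>E\<in>F n. \<forall>E'\<in>F n. E \<subset> E' \<longrightarrow> opl \<eta> (\<rho> E') (\<rho> E))"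
  proof
    fix n
    show "\<exists>\<rho>. n \<ge> 1 \<longrightarrow> (\<forall>E\<in>F n. \<forall>E'\<in>F n. E \<subset> E' \<longrightarrow> opl \<eta> (\<rho> E') (\<rho> E))"
    proof (cases "n \<ge> 1")
      case True
      then have "CB_less (F n) (omega_pow \<eta>)" using Fprops by blast
      then show ?thesis using ranks_exist by blast
    qed simp
  qed
  then obtain rk where rk: "\<forall>n. n \<ge> 1 \<longrightarrow> (\<forall>E\<in>F n. \<forall>E'\<in>F n. E \<subset> E' \<longrightarrow> opl \<eta> (rk n E') (rk n E))"
    using choice[of "\<lambda>n \<rho>. n \<ge> 1 \<longrightarrow> (\<forall>E\<in>F n. \<forall>E'\<in>F n. E \<subset> E' \<longrightarrow> opl \<eta> (\<rho> E') (\<rho> E))"]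
    by blast
  have Fher: "hereditary (F n)" and Fspr: "spreading (F n)" and Fsing: "{1} \<in> F n" if "n \<ge> 1" for n
    using Fprops that unfolding regular_def contains_singletons_def by auto
  show ?thesis
    unfolding weakly_null_wrt_def
  proof
    assume "\<exists>k. strict_mono_on {1..} k \<and> (\<forall>n\<ge>1. 1 \<le> k n) \<and>
           l1_spreading_model (S \<eta>) (bracket_norm F \<omega>) (\<lambda>n. unit_vec (k n))"
    then obtain k where ksm: "strict_mono_on {1..} k" and k1: "\<forall>n\<ge>1. 1 \<le> k n"
      and l1: "l1_spreading_model (S \<eta>) (bracket_norm F \<omega>) (\<lambda>n. unit_vec (k n))" by blast
    obtain \<delta> where \<delta>0: "\<delta> > 0" and \<delta>: "\<forall>E\<in>S \<eta>. \<forall>a :: nat \<Rightarrow> real.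
        (\<forall>i\<in>E. 0 \<le> a i) \<and> (\<Sum>i\<in>E. a i) = 1 \<longrightarrow>
        \<delta> \<le> bracket_norm F \<omega> (\<lambda>j. \<Sum>i\<in>E. a i * unit_vec (k i) j)"
      using l1 unfolding l1_spreading_model_def by blast
    obtain N0 where N0: "\<forall>n\<ge>N0. norm (\<omega> n - 0) < \<delta>/2"
      using \<omega>0 \<delta>0 unfolding LIMSEQ_iff by (metis half_gt_zero)
    have kinj: "inj_on k {1..}" using strict_mono_on_imp_inj_on[OF ksm] .
    define Gk where "Gk n = {B. B \<subseteq> {1..} \<and> k ` B \<in> F n}" for n
    define \<rho>k where "\<rho>k n B = rk n (k ` B)" for n B
    define \<G> where "\<G> = (\<lambda>n. (Gk n, \<rho>k n)) ` {1..N0}"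
    have finG: "finite \<G>" unfolding \<G>_def by simp
    have hrG: "\<forall>q\<in>\<G>. hereditary (fst q) \<and> ranked \<eta> (fst q) (snd q)"
    proof
      fix q assume "q \<in> \<G>"
      then obtain n where n: "n \<in> {1..N0}" "q = (Gk n, \<rho>k n)" unfolding \<G>_def by blast
      have n1: "n \<ge> 1" using n(1) by simp
      have "hereditary (Gk n)"
        unfolding hereditary_def Gk_def
      proof (intro ballI allI impI)
        fix B B' assume B: "B \<in> {B. B \<subseteq> {1..} \<and> k ` B \<in> F n}" and sub: "B' \<subseteq> B"
        have "k ` B' \<in> F n" using hereditaryD[OF Fher[OF n1]] B sub by blast
        then show "B' \<in> {B. B \<subseteq> {1..} \<and> k ` B \<in> F n}" using B sub by blast
      qed
      moreover have "ranked \<eta> (Gk n) (\<rho>k n)"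
        unfolding ranked_def
      proof (intro ballI impI)
        fix B B' assume B: "B \<in> Gk n" and B': "B' \<in> Gk n" and lt: "B \<subset> B'"
        have sub: "B \<subseteq> {1..}" "B' \<subseteq> {1..}" using B B' unfolding Gk_def by auto
        have "k ` B \<subseteq> k ` B'" using lt by blast
        moreover have "k ` B \<noteq> k ` B'"
        proof
          assume "k ` B = k ` B'"
          then have "B = B'" using inj_on_image_eq_iff[OF kinj sub] by blast
          then show False using lt by blast
        qed
        ultimately have ss: "k ` B \<subset> k ` B'" by blast
        have rkn: "\<forall>E\<in>F n. \<forall>E'\<in>F n. E \<subset> E' \<longrightarrow> opl \<eta> (rk n E') (rk n E)" using rk n1 by blast
        have kB: "k ` B \<in> F n" "k ` B' \<in> F n" using B B' unfolding Gk_def by auto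
        show "opl \<eta> (\<rho>k n B') (\<rho>k n B)"
          unfolding \<rho>k_def using rkn[rule_format, OF kB ss] .
      qed
      ultimately show "hereditary (fst q) \<and> ranked \<eta> (fst q) (snd q)" using n(2) by simp
    qed
    define \<epsilon> where "\<epsilon> = (\<delta>/2)\<^sup>2"
    have eps: "\<epsilon> > 0" unfolding \<epsilon>_def using \<delta>0 by simp
    have K: "Kprop S \<eta>" using K_all[OF sys] .
    obtain E a where E: "E \<in> S \<eta>" "good_avg E a" "E \<subseteq> {0<..}"
      and mass: "\<forall>q\<in>\<G>. \<forall>A\<in>fst q. A \<subseteq> E \<longrightarrow> sum a A < \<epsilon>"
      using KpropD[OF K ordLeq_reflexive[OF w\<eta>] finG eps hrG, of 0] by blast
    have Ef: "finite E" "\<forall>i\<in>E. 0 \<le> a i" "sum a E = 1" using E(2) unfolding good_avg_def by auto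
    have E1: "E \<subseteq> {1..}" using E(3) by auto
    have kinjE: "inj_on k E" using inj_on_subset[OF kinj E1] .
    define x where "x j = (\<Sum>i\<in>E. a i * unit_vec (k i) j)" for j
    have \<delta>x: "\<delta> \<le> bracket_norm F \<omega> x" using \<delta> E(1) Ef unfolding x_def by blast
    define U where "U = k ` E"
    have finU: "finite U" unfolding U_def using Ef(1) by simp
    have xval: "x (k i) = a i" if "i \<in> E" for i
      unfolding x_def using unit_sum_val[OF kinjE that Ef(1)] .
    have xz: "\<forall>j. j \<notin> U \<longrightarrow> x j = 0"
    proof (intro allI impI)
      fix j assume j: "j \<notin> U"
      have "\<forall>i\<in>E. a i * unit_vec (k i) j = 0" using j unfolding U_def unit_vec_def by auto
      then show "x j = 0" unfolding x_def by (intro sum.neutral) blast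
    qed
    have xnn: "\<forall>j. 0 \<le> x j"
      unfolding x_def unit_vec_def using Ef(2) by (auto intro!: sum_nonneg)
    have xsum: "sum x A = sum a {i\<in>E. k i \<in> A}" if AU: "A \<subseteq> U" for A
    proof -
      have eq: "k ` {i\<in>E. k i \<in> A} = A"
      proof (rule set_eqI, rule iffI)
        fix y assume "y \<in> k ` {i\<in>E. k i \<in> A}" then show "y \<in> A" by blast
      next
        fix y assume y: "y \<in> A"
        then obtain i where "i \<in> E" "y = k i" using AU unfolding U_def by blast
        then show "y \<in> k ` {i\<in>E. k i \<in> A}" using y by blast
      qed
      have "{i\<in>E. k i \<in> A} \<subseteq> E" by blast
      then have inj: "inj_on k {i\<in>E. k i \<in> A}" using inj_on_subset[OF kinjE] by blast
      have "sum x A = sum x (k ` {i\<in>E. k i \<in> A})" using eq by simp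
      also have "\<dots> = (\<Sum>i\<in>{i\<in>E. k i \<in> A}. x (k i))" using sum.reindex[OF inj, of x] by simp
      also have "\<dots> = sum a {i\<in>E. k i \<in> A}" using xval by (intro sum.cong) auto
      finally show ?thesis .
    qed
    have tot: "sum x U \<le> 1"
    proof -
      have "{i\<in>E. k i \<in> U} = E" unfolding U_def by auto
      then show ?thesis using xsum[of U] Ef(3) by simp
    qed
    have bn1: "block_norm (F n) x \<le> 1" if n1: "n \<ge> 1" for n
    proof -
      have "\<forall>A\<in>F n. A \<subseteq> U \<longrightarrow> sum x A \<le> 1"
      proof (intro ballI impI)
        fix A assume "A \<in> F n" "A \<subseteq> U"
        then have "sum x A = sum a {i\<in>E. k i \<in> A}" using xsum by blast
        also have "\<dots> \<le> sum a E" using Ef by (intro sum_mono2) auto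
        finally show "sum x A \<le> 1" using Ef(3) by simp
      qed
      then show ?thesis using block_bound[OF Fher[OF n1] Fspr[OF n1] Fsing[OF n1] xnn finU xz tot, of 1] by simp
    qed
    have bn2: "block_norm (F n) x \<le> \<delta>/2" if n1: "n \<ge> 1" and nN: "n \<le> N0" for n
    proof -
      have qG: "(Gk n, \<rho>k n) \<in> \<G>" unfolding \<G>_def using n1 nN by auto
      have "\<forall>A\<in>F n. A \<subseteq> U \<longrightarrow> sum x A \<le> \<epsilon>"
      proof (intro ballI impI)
        fix A assume A: "A \<in> F n" "A \<subseteq> U"
        define B where "B = {i\<in>E. k i \<in> A}"
        have kB: "k ` B = A" using A(2) unfolding B_def U_def by auto
        have "B \<in> Gk n" unfolding Gk_def using kB A(1) E1 unfolding B_def by auto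
        moreover have "B \<subseteq> E" unfolding B_def by auto
        ultimately have "sum a B < \<epsilon>" using mass qG by fastforce
        then show "sum x A \<le> \<epsilon>" using xsum[OF A(2)] unfolding B_def by simp
      qed
      then have "block_norm (F n) x \<le> sqrt \<epsilon>"
        using block_bound[OF Fher[OF n1] Fspr[OF n1] Fsing[OF n1] xnn finU xz tot, of \<epsilon>] eps by simp
      moreover have "sqrt \<epsilon> = \<delta>/2" unfolding \<epsilon>_def using \<delta>0 by simp
      ultimately show ?thesis by simp
    qed
    have each: "\<omega> n * block_norm (F n) x \<le> \<delta>/2" if n1: "n \<ge> 1" for n
    proof -
      have \<omega>n: "0 < \<omega> n" "\<omega> n \<le> 1" using \<omega>b n1 by auto
      show ?thesis
      proof (cases "block_norm (F n) x \<le> 0")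
        case True
        then have "\<omega> n * block_norm (F n) x \<le> 0" using \<omega>n by (simp add: mult_nonneg_nonpos)
        then show ?thesis using \<delta>0 by simp
      next
        case False
        then have bpos: "block_norm (F n) x > 0" by simp
        show ?thesis
        proof (cases "n \<le> N0")
          case True
          have "\<omega> n * block_norm (F n) x \<le> 1 * block_norm (F n) x"
            using \<omega>n bpos by (intro mult_right_mono) auto
          then show ?thesis using bn2[OF n1 True] by simp
        next
          case False
          then have "norm (\<omega> n - 0) < \<delta>/2" using N0 by simp
          then have \<omega>s: "\<omega> n < \<delta>/2" by simp
          have "\<omega> n * block_norm (F n) x \<le> \<omega> n * 1"
            using \<omega>n bn1[OF n1] by (intro mult_left_mono) auto
          then show ?thesis using \<omega>s by simp
        qed
      qed
    qed
    have "bracket_norm F \<omega> x \<le> \<delta>/2"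
      unfolding bracket_norm_def
    proof (rule cSUP_least)
      show "{1::nat..} \<noteq> {}" by auto
      fix n :: nat assume "n \<in> {1..}"
      then show "\<omega> n * block_norm (F n) x \<le> \<delta>/2" using each by simp
    qed
    then show False using \<delta>x \<delta>0 by simp
  qed
qed

end
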